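(* The map induced on associated graded objects \[ E^0\kappa\colon E^0(A/\!/E(1))_*\to(A/\!/E(2))_*\otimes E(\overline{\tau}_2) \] is an isomorphism of $E(2)_*$-comodule algebras.
   Context: Let $p$ be an odd prime. In the mod $p$ dual Steenrod algebra let $\zeta_n,\overline{\tau}_n$ be the conjugates of Milnor's $\xi_n,\tau_n$. Let $(A/\!/E(1))_*=\mathbb{F}_p[\zeta_1,\zeta_2,\ldots]\otimes E(\overline{\tau}_2,\overline{\tau}_3,\ldots)$ and $(A/\!/E(2))_*=\mathbb{F}_p[\zeta_1,\ldots]\otimes E(\overline{\tau}_3,\ldots)$; they are comodule algebras over $E(2)_*=E(\overline{\tau}_0,\overline{\tau}_1,\overline{\tau}_2)$ (primitive generators) with $\alpha(\zeta_k)=1\otimes\zeta_k$ and $\alpha(\overline{\tau}_n)=1\otimes\overline{\tau}_n+\sum_{l=0}^{2}\overline{\tau}_l\otimes\zeta_{n-l}^{p^l}$ ($\zeta_0=1$). $E(\overline{\tau}_2)=(E(2)/\!/E(1))_*$ with $\overline{\tau}_2$ primitive, and $(A/\!/E(2))_*\otimes E(\overline{\tau}_2)$ has the diagonal coaction. Let $\kappa\colon(A/\!/E(1))_*\to(A/\!/E(2))_*\otimes E(\overline{\tau}_2)$ be the linear isomorphism $m\overline{\tau}_2^\epsilon\mapsto m\otimes\overline{\tau}_2^\epsilon$ ($m$ a monomial in $(A/\!/E(2))_*$, $\epsilon\in\{0,1\}$); it is not a comodule map. Weight: $\mathrm{wt}(\zeta_k)=\mathrm{wt}(\overline{\tau}_k)=p^k$,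 additive; $M_2(k)$ is the span of monomials of $(A/\!/E(2))_*$ of weight $pk$, and $F^j(A/\!/E(1))_*=\kappa^{-1}(\bigoplus_{k\ge j}M_2(k)\otimes E(\overline{\tau}_2))$, a decreasing multiplicative filtration by $E(2)_*$-subcomodules, with associated graded $E^0(A/\!/E(1))_*=\bigoplus_jF^j/F^{j+1}$; $E^0\kappa$ is the map induced by $\kappa$. *)

theory Defs
  imports Main "HOL-Library.Poly_Mapping" "HOL-Computational_Algebra.Primes"
begin

section \<open>Monomials of the (conjugate) dual Steenrod algebra\<close>

text \<open>A monomial zeta^a tau_S is encoded as (a, S): a finitely supported exponent
vector a (Poly_Mapping.lookup a k = exponent of zeta_k, k >= 1) and a finite set S of indices of the
exterior generators tau-bar_n; tau_S means the product tau_{s1} ... tau_{sm} with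
s1 < ... < sm.  Vectors over the field are finitely supported functions on a basis.\<close>

type_synonym mono = "(nat \<Rightarrow>\<^sub>0 nat) \<times> nat set"

definition sc :: "'k::comm_ring_1 \<Rightarrow> ('b \<Rightarrow>\<^sub>0 'k) \<Rightarrow> ('b \<Rightarrow>\<^sub>0 'k)" where
  "sc c v = Poly_Mapping.map (\<lambda>x. c * x) v"

definition lin :: "('b \<Rightarrow> ('c \<Rightarrow>\<^sub>0 'k::comm_ring_1)) \<Rightarrow> ('b \<Rightarrow>\<^sub>0 'k) \<Rightarrow> ('c \<Rightarrow>\<^sub>0 'k)" where
  "lin f v = (\<Sum>b\<in>Poly_Mapping.keys v. sc (Poly_Mapping.lookup v b) (f b))"

definition bilin :: "('a \<Rightarrow> 'b \<Rightarrow> ('c \<Rightarrow>\<^sub>0 'k::comm_ring_1))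
     \<Rightarrow> ('a \<Rightarrow>\<^sub>0 'k) \<Rightarrow> ('b \<Rightarrow>\<^sub>0 'k) \<Rightarrow> ('c \<Rightarrow>\<^sub>0 'k)" where
  "bilin f u v = (\<Sum>a\<in>Poly_Mapping.keys u. \<Sum>b\<in>Poly_Mapping.keys v. sc (Poly_Mapping.lookup u a * Poly_Mapping.lookup v b) (f a b))"

definition inv_count :: "nat set \<Rightarrow> nat set \<Rightarrow> nat" where
  "inv_count S T = card {(s,t). s \<in> S \<and> t \<in> T \<and> t < s}"

text \<open>Product of monomials (graded commutative: zeta's even, tau's odd).\<close>
definition mmul :: "mono \<Rightarrow> mono \<Rightarrow> (mono \<Rightarrow>\<^sub>0 'k::comm_ring_1)" where
  "mmul m n = (if snd m \<inter> snd n = {}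
      then Poly_Mapping.single (fst m + fst n, snd m \<union> snd n) ((-1) ^ inv_count (snd m) (snd n))
      else 0)"

definition vmul :: "(mono \<Rightarrow>\<^sub>0 'k::comm_ring_1) \<Rightarrow> (mono \<Rightarrow>\<^sub>0 'k) \<Rightarrow> (mono \<Rightarrow>\<^sub>0 'k)" where
  "vmul = bilin mmul"

definition vone :: "mono \<Rightarrow>\<^sub>0 'k::comm_ring_1" where
  "vone = Poly_Mapping.single (0, {}) 1"

text \<open>Parity of the degree of a monomial = number of tau's.\<close>
definition par :: "mono \<Rightarrow> nat" where "par m = card (snd m)"

text \<open>Tensor of two vectors, and the graded (Koszul) tensor product algebra structure:
(u (x) v)(u' (x) v') = (-1)^(|v||u'|) uu' (x) vv'.\<close>
definition tens :: "('a \<Rightarrow>\<^sub>0 'k::comm_ring_1) \<Rightarrow> ('b \<Rightarrow>\<^sub>0 'k) \<Rightarrow> (('a \<times> 'b) \<Rightarrow>\<^sub>0 'k)" where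
  "tens x y = bilin (\<lambda>a b. Poly_Mapping.single (a, b) 1) x y"

definition tbas :: "mono \<times> mono \<Rightarrow> mono \<times> mono \<Rightarrow> ((mono \<times> mono) \<Rightarrow>\<^sub>0 'k::comm_ring_1)" where
  "tbas uv uv' = sc ((-1) ^ (par (snd uv) * par (fst uv')))
                    (tens (mmul (fst uv) (fst uv')) (mmul (snd uv) (snd uv')))"

definition tmul :: "((mono \<times> mono) \<Rightarrow>\<^sub>0 'k::comm_ring_1) \<Rightarrow> ((mono \<times> mono) \<Rightarrow>\<^sub>0 'k)
     \<Rightarrow> ((mono \<times> mono) \<Rightarrow>\<^sub>0 'k)" where
  "tmul = bilin tbas"

definition tau :: "nat \<Rightarrow> mono" where "tau n = (0, {n})"

text \<open>zeta_k^e, with zeta_0 = 1.\<close>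
definition zpow :: "nat \<Rightarrow> nat \<Rightarrow> mono" where
  "zpow k e = (if k = 0 then (0, {}) else (Poly_Mapping.single k e, {}))"

section \<open>The E(2)_*-coaction\<close>

text \<open>Elements of E(2)_* (x) V are encoded in (mono x basis(V)) =>0 k, the left monomial
being tau_S with S a subset of {0,1,2}.\<close>

definition alpha_tau :: "nat \<Rightarrow> nat \<Rightarrow> ((mono \<times> mono) \<Rightarrow>\<^sub>0 'k::comm_ring_1)" where
  "alpha_tau p n = Poly_Mapping.single ((0, {}), tau n) 1
      + (\<Sum>l\<le>2. Poly_Mapping.single (tau l, zpow (n - l) (p ^ l)) 1)"

text \<open>alpha is multiplicative: alpha(zeta^a tau_s1 ... tau_sm)
 = (1 (x) zeta^a) alpha(tau_s1) ... alpha(tau_sm).\<close>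
definition alpha_mono :: "nat \<Rightarrow> mono \<Rightarrow> ((mono \<times> mono) \<Rightarrow>\<^sub>0 'k::comm_ring_1)" where
  "alpha_mono p m = foldl (\<lambda>acc n. tmul acc (alpha_tau p n))
      (Poly_Mapping.single ((0, {}), (fst m, {})) 1) (sorted_list_of_set (snd m))"

definition alpha :: "nat \<Rightarrow> (mono \<Rightarrow>\<^sub>0 'k::comm_ring_1) \<Rightarrow> ((mono \<times> mono) \<Rightarrow>\<^sub>0 'k)" where
  "alpha p = lin (alpha_mono p)"

text \<open>Coefficient of tau_S (S subset of {0,1,2}) in an element of E(2)_* (x) V.\<close>
definition comp :: "nat set \<Rightarrow> ((mono \<times> 'b) \<Rightarrow>\<^sub>0 'k::comm_ring_1) \<Rightarrow> ('b \<Rightarrow>\<^sub>0 'k)" where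
  "comp S w = lin (\<lambda>ey. if fst ey = (0, S) then Poly_Mapping.single (snd ey) 1 else 0) w"

definition mAE1 :: "mono \<Rightarrow> bool" where
  "mAE1 m \<longleftrightarrow> 0 \<notin> Poly_Mapping.keys (fst m) \<and> finite (snd m) \<and> snd m \<subseteq> {2..}"

definition mAE2 :: "mono \<Rightarrow> bool" where
  "mAE2 m \<longleftrightarrow> 0 \<notin> Poly_Mapping.keys (fst m) \<and> finite (snd m) \<and> snd m \<subseteq> {3..}"

definition AE1 :: "(mono \<Rightarrow>\<^sub>0 'k::comm_ring_1) set" where
  "AE1 = {x. \<forall>m\<in>Poly_Mapping.keys x. mAE1 m}"

text \<open>(A//E(2))_* (x) E(tau_2), basis pairs (m, t) with t = 1 or tau_2.\<close>
definition TT :: "((mono \<times> mono) \<Rightarrow>\<^sub>0 'k::comm_ring_1) set" where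
  "TT = {y. \<forall>mt\<in>Poly_Mapping.keys y. mAE2 (fst mt) \<and> snd mt \<in> {(0, {}), tau 2}}"

definition TTone :: "(mono \<times> mono) \<Rightarrow>\<^sub>0 'k::comm_ring_1" where
  "TTone = Poly_Mapping.single ((0, {}), (0, {})) 1"

text \<open>Coaction on E(tau_2): tau_2 primitive.\<close>
definition alphaE :: "mono \<Rightarrow> ((mono \<times> mono) \<Rightarrow>\<^sub>0 'k::comm_ring_1)" where
  "alphaE t = Poly_Mapping.single ((0, {}), t) 1
     + (if t = tau 2 then Poly_Mapping.single (tau 2, (0, {})) 1 else 0)"

text \<open>Diagonal coaction on (A//E(2))_* (x) E(tau_2):
alpha(m (x) t) = sum (-1)^(|m''||t'|) m't' (x) (m'' (x) t'').\<close>
definition alphaT_bas :: "nat \<Rightarrow> mono \<times> mono \<Rightarrow> ((mono \<times> (mono \<times> mono)) \<Rightarrow>\<^sub>0 'k::comm_ring_1)" where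
  "alphaT_bas p mt = bilin
      (\<lambda>em et. sc ((-1) ^ (par (snd em) * par (fst et)))
          (lin (\<lambda>e. Poly_Mapping.single (e, (snd em, snd et)) 1) (mmul (fst em) (fst et))))
      (alpha p (Poly_Mapping.single (fst mt) 1)) (alphaE (snd mt))"

definition alphaT :: "nat \<Rightarrow> ((mono \<times> mono) \<Rightarrow>\<^sub>0 'k::comm_ring_1)
     \<Rightarrow> ((mono \<times> (mono \<times> mono)) \<Rightarrow>\<^sub>0 'k)" where
  "alphaT p = lin (alphaT_bas p)"

text \<open>kappa(m tau_2^eps) = m (x) tau_2^eps.  For a basis monomial (a,T) with 2 in T one has
(a,T) = (-1)^inv_count (T-{2}) {2} * (a,T-{2}) tau_2 (the sign is its own inverse).\<close>
definition kappa_mono :: "mono \<Rightarrow> ((mono \<times> mono) \<Rightarrow>\<^sub>0 'k::comm_ring_1)" where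
  "kappa_mono m = (if 2 \<in> snd m
      then Poly_Mapping.single ((fst m, snd m - {2}), tau 2) ((-1) ^ inv_count (snd m - {2}) {2})
      else Poly_Mapping.single (m, (0, {})) 1)"

definition kappa :: "(mono \<Rightarrow>\<^sub>0 'k::comm_ring_1) \<Rightarrow> ((mono \<times> mono) \<Rightarrow>\<^sub>0 'k)" where
  "kappa = lin kappa_mono"

definition wt :: "nat \<Rightarrow> mono \<Rightarrow> nat" where
  "wt p m = (\<Sum>k\<in>Poly_Mapping.keys (fst m). Poly_Mapping.lookup (fst m) k * p ^ k) + (\<Sum>s\<in>snd m. p ^ s)"

text \<open>(+)_{k >= j} M_2(k) (x) E(tau_2)\<close>
definition TF :: "nat \<Rightarrow> nat \<Rightarrow> ((mono \<times> mono) \<Rightarrow>\<^sub>0 'k::comm_ring_1) set" where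
  "TF p j = {y \<in> TT. \<forall>mt\<in>Poly_Mapping.keys y. \<exists>k\<ge>j. wt p (fst mt) = p * k}"

definition Fil :: "nat \<Rightarrow> nat \<Rightarrow> (mono \<Rightarrow>\<^sub>0 'k::comm_ring_1) set" where
  "Fil p j = {x \<in> AE1. kappa x \<in> TF p j}"

section \<open>Associated graded E^0 = (+)_j F^j / F^(j+1)\<close>

definition rel :: "nat \<Rightarrow> nat \<Rightarrow> ((mono \<Rightarrow>\<^sub>0 'k::comm_ring_1) \<times> (mono \<Rightarrow>\<^sub>0 'k)) set" where
  "rel p j = {(x, y). x \<in> Fil p j \<and> y \<in> Fil p j \<and> x - y \<in> Fil p (Suc j)}"

definition Gr :: "nat \<Rightarrow> nat \<Rightarrow> (mono \<Rightarrow>\<^sub>0 'k::comm_ring_1) set set" where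
  "Gr p j = Fil p j // rel p j"

definition cls :: "nat \<Rightarrow> nat \<Rightarrow> (mono \<Rightarrow>\<^sub>0 'k::comm_ring_1) \<Rightarrow> (mono \<Rightarrow>\<^sub>0 'k) set" where
  "cls p j x = rel p j `` {x}"

definition rep :: "'a set \<Rightarrow> 'a" where "rep X = (SOME x. x \<in> X)"

text \<open>An element of E^0 is a family of classes, almost all zero.\<close>
definition E0 :: "nat \<Rightarrow> (nat \<Rightarrow> (mono \<Rightarrow>\<^sub>0 'k::comm_ring_1) set) set" where
  "E0 p = {f. (\<forall>j. f j \<in> Gr p j) \<and> finite {j. f j \<noteq> cls p j 0}}"

definition E0add where
  "E0add p f g = (\<lambda>j. cls p j (rep (f j) + rep (g j)))"

definition E0smul where
  "E0smul p c f = (\<lambda>j. cls p j (sc c (rep (f j))))"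

definition E0mul where
  "E0mul p f g = (\<lambda>n. cls p n (\<Sum>i\<le>n. vmul (rep (f i)) (rep (g (n - i)))))"

definition E0one where
  "E0one p = (\<lambda>j. cls p j (if j = 0 then vone else 0))"

text \<open>Induced coaction E^0 -> E(2)_* (x) E^0, the latter encoded as functions
S |-> (coefficient of tau_S) in E^0.\<close>
definition E0coact where
  "E0coact p f = (\<lambda>S j. cls p j (comp S (alpha p (rep (f j)))))"

definition prj :: "nat \<Rightarrow> nat \<Rightarrow> ((mono \<times> mono) \<Rightarrow>\<^sub>0 'k::comm_ring_1) \<Rightarrow> ((mono \<times> mono) \<Rightarrow>\<^sub>0 'k)" where
  "prj p j = lin (\<lambda>mt. if wt p (fst mt) = p * j then Poly_Mapping.single mt 1 else 0)"

definition E0kappa :: "nat \<Rightarrow> (nat \<Rightarrow> (mono \<Rightarrow>\<^sub>0 'k::comm_ring_1) set) \<Rightarrow> ((mono \<times> mono) \<Rightarrow>\<^sub>0 'k)" where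
  "E0kappa p f = (\<Sum>j\<in>{j. f j \<noteq> cls p j 0}. prj p j (kappa (rep (f j))))"

end

theory Submission
  imports Defs
begin


abbreviation LK where "LK \<equiv> Poly_Mapping.lookup"
abbreviation KS where "KS \<equiv> Poly_Mapping.keys"
abbreviation SG where "SG \<equiv> Poly_Mapping.single"

lemma lookup_sc[simp]: "LK (sc c v) b = c * LK v b"
  unfolding sc_def by transfer (auto simp: when_def)

lemma sc_zero_left[simp]: "sc 0 v = 0"
  by (rule poly_mapping_eqI) simp
lemma sc_zero_right[simp]: "sc c 0 = 0"
  by (rule poly_mapping_eqI) simp
lemma sc_one[simp]: "sc 1 v = v"
  by (rule poly_mapping_eqI) simp
lemma sc_sc[simp]: "sc c (sc d v) = sc (c * d) v"
  by (rule poly_mapping_eqI) (simp add: mult.assoc)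
lemma sc_add: "sc c (v + w) = sc c v + sc c w"
  by (rule poly_mapping_eqI) (simp add: lookup_add algebra_simps)
lemma sc_add_left: "sc (c + d) v = sc c v + sc d v"
  by (rule poly_mapping_eqI) (simp add: lookup_add algebra_simps)
lemma sc_minus: "sc c (- v) = - sc c v"
  by (rule poly_mapping_eqI) simp
lemma sc_uminus_left: "sc (- c) v = - sc c v"
  by (rule poly_mapping_eqI) simp
lemma sc_diff: "sc c (v - w) = sc c v - sc c w"
  by (rule poly_mapping_eqI) (simp add: lookup_minus algebra_simps)
lemma sc_sum: "sc c (sum g A) = sum (\<lambda>x. sc c (g x)) A"
  by (rule poly_mapping_eqI) (simp add: lookup_sum sum_distrib_left)
lemma sc_single[simp]: "sc c (SG b d) = SG b (c * d)"
  by (rule poly_mapping_eqI) (simp add: lookup_single when_def)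
lemma keys_sc: "KS (sc c v) \<subseteq> KS v"
  by (auto simp: in_keys_iff)

lemma lin_superset:
  assumes "finite A" "KS v \<subseteq> A"
  shows "lin f v = (\<Sum>b\<in>A. sc (LK v b) (f b))"
  unfolding lin_def
  by (rule sum.mono_neutral_left) (use assms in \<open>auto simp: in_keys_iff\<close>)

lemma lin_add: "lin f (v + w) = lin f v + lin f w"
proof -
  let ?A = "KS v \<union> KS w"
  have "KS (v + w) \<subseteq> ?A" by (rule keys_add)
  then have "lin f (v + w) = (\<Sum>b\<in>?A. sc (LK (v+w) b) (f b))"
    by (intro lin_superset) auto
  also have "\<dots> = (\<Sum>b\<in>?A. sc (LK v b) (f b)) + (\<Sum>b\<in>?A. sc (LK w b) (f b))"
    by (simp add: lookup_add sc_add_left sum.distrib)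
  also have "\<dots> = lin f v + lin f w"
    by (subst (1 2) lin_superset[where A="?A"]) auto
  finally show ?thesis .
qed

lemma lin_sc: "lin f (sc c v) = sc c (lin f v)"
proof -
  have "lin f (sc c v) = (\<Sum>b\<in>KS v. sc (LK (sc c v) b) (f b))"
    by (intro lin_superset) (auto simp: keys_sc)
  also have "\<dots> = sc c (lin f v)" by (simp add: lin_def sc_sum)
  finally show ?thesis .
qed

lemma lin_zero[simp]: "lin f 0 = 0"
  by (simp add: lin_def)

lemma lin_single[simp]: "lin f (SG b c) = sc c (f b)"
proof -
  have "lin f (SG b c) = (\<Sum>b'\<in>{b}. sc (LK (SG b c) b') (f b'))"
    by (intro lin_superset) auto
  then show ?thesis by simp
qed

lemma lin_minus: "lin f (- v) = - lin f v"
  using lin_sc[of f "-1" v] by (simp add: sc_uminus_left)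

lemma lin_diff: "lin f (v - w) = lin f v - lin f w"
  by (metis diff_conv_add_uminus lin_add lin_minus)

lemma lin_sum: "lin f (sum g A) = (\<Sum>x\<in>A. lin f (g x))"
  by (induction A rule: infinite_finite_induct) (auto simp: lin_add)

lemma lin_cong: "(\<And>b. b \<in> KS v \<Longrightarrow> f b = g b) \<Longrightarrow> lin f v = lin g v"
  by (simp add: lin_def)

lemma lookup_lin: "LK (lin f v) c = (\<Sum>b\<in>KS v. LK v b * LK (f b) c)"
  by (simp add: lin_def lookup_sum)

lemma lin_comp: "lin g (lin f v) = lin (\<lambda>b. lin g (f b)) v"
  unfolding lin_def[of f] by (simp add: lin_sum lin_sc) (simp add: lin_def)

lemma lin_id[simp]: "lin (\<lambda>b. SG b 1) v = v"
proof (rule poly_mapping_eqI)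
  fix c
  show "LK (lin (\<lambda>b. SG b 1) v) c = LK v c"
    by (cases "c \<in> KS v") (auto simp: lookup_lin lookup_single when_def in_keys_iff if_distrib cong: if_cong)
qed

lemma lin_linear_fun: "lin (\<lambda>b. f b + g b) v = lin f v + lin g v"
  by (simp add: lin_def sc_add sum.distrib)
lemma lin_sc_fun: "lin (\<lambda>b. sc c (f b)) v = sc c (lin f v)"
  by (simp add: lin_def sc_sum mult.commute)
lemma lin_zero_fun[simp]: "lin (\<lambda>b. 0) v = 0"
  by (simp add: lin_def)
lemma lin_sum_fun: "lin (\<lambda>b. \<Sum>i\<in>I. f i b) v = (\<Sum>i\<in>I. lin (f i) v)"
  by (induction I rule: infinite_finite_induct) (auto simp: lin_linear_fun)

lemma bilin_alt: "bilin f u v = lin (\<lambda>a. lin (f a) v) u"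
  by (simp add: bilin_def lin_def sc_sum mult.commute)

lemma bilin_alt2: "bilin f u v = lin (\<lambda>b. lin (\<lambda>a. f a b) u) v"
  by (simp add: bilin_def lin_def sc_sum mult.commute sum.swap[of _ "KS u"])

lemma bilin_add1: "bilin f (u + u') v = bilin f u v + bilin f u' v"
  by (simp add: bilin_alt lin_add)
lemma bilin_add2: "bilin f u (v + v') = bilin f u v + bilin f u v'"
  by (simp add: bilin_alt2 lin_add)
lemma bilin_sc1: "bilin f (sc c u) v = sc c (bilin f u v)"
  by (simp add: bilin_alt lin_sc)
lemma bilin_sc2: "bilin f u (sc c v) = sc c (bilin f u v)"
  by (simp add: bilin_alt2 lin_sc)
lemma bilin_zero1[simp]: "bilin f 0 v = 0" by (simp add: bilin_def)
lemma bilin_zero2[simp]: "bilin f u 0 = 0" by (simp add: bilin_def)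
lemma bilin_single[simp]: "bilin f (SG a c) (SG b d) = sc (c * d) (f a b)"
  by (simp add: bilin_alt lin_sc)
lemma bilin_single1: "bilin f (SG a c) v = sc c (lin (f a) v)"
  by (simp add: bilin_alt)
lemma bilin_single2: "bilin f u (SG b d) = sc d (lin (\<lambda>a. f a b) u)"
  by (simp add: bilin_alt2)
lemma bilin_sum1: "bilin f (sum g A) v = (\<Sum>x\<in>A. bilin f (g x) v)"
  by (simp add: bilin_alt lin_sum)
lemma bilin_sum2: "bilin f u (sum g A) = (\<Sum>x\<in>A. bilin f u (g x))"
  by (simp add: bilin_alt2 lin_sum)
lemma bilin_minus1: "bilin f (- u) v = - bilin f u v"
  by (simp add: bilin_alt lin_minus)
lemma bilin_minus2: "bilin f u (- v) = - bilin f u v"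
  by (simp add: bilin_alt2 lin_minus)
lemma bilin_diff1: "bilin f (u - u') v = bilin f u v - bilin f u' v"
  by (simp add: bilin_alt lin_diff)
lemma bilin_diff2: "bilin f u (v - v') = bilin f u v - bilin f u v'"
  by (simp add: bilin_alt2 lin_diff)


lemma inv_count_empty1[simp]: "inv_count {} B = 0" by (simp add: inv_count_def)
lemma inv_count_empty2[simp]: "inv_count A {} = 0" by (simp add: inv_count_def)

lemma inv_count_set_fin: "finite A \<Longrightarrow> finite B \<Longrightarrow> finite {(s,t). s \<in> A \<and> t \<in> B \<and> t < s}"
  by (rule finite_subset[of _ "A \<times> B"]) auto

lemma inv_count_union1:
  assumes "finite A" "finite B" "finite C" "A \<inter> B = {}"
  shows "inv_count (A \<union> B) C = inv_count A C + inv_count B C"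
proof -
  have "{(s,t). s \<in> A \<union> B \<and> t \<in> C \<and> t < s} = {(s,t). s \<in> A \<and> t \<in> C \<and> t < s} \<union> {(s,t). s \<in> B \<and> t \<in> C \<and> t < s}" by auto
  then show ?thesis unfolding inv_count_def
    using assms by (simp add: card_Un_disjoint inv_count_set_fin, subst card_Un_disjoint) (auto simp: inv_count_set_fin)
qed

lemma inv_count_union2:
  assumes "finite A" "finite B" "finite C" "B \<inter> C = {}"
  shows "inv_count A (B \<union> C) = inv_count A B + inv_count A C"
proof -
  have "{(s,t). s \<in> A \<and> t \<in> B \<union> C \<and> t < s} = {(s,t). s \<in> A \<and> t \<in> B \<and> t < s} \<union> {(s,t). s \<in> A \<and> t \<in> C \<and> t < s}" by auto
  then show ?thesis unfolding inv_count_def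
    using assms by (subst card_Un_disjoint[symmetric]) (auto simp: inv_count_set_fin)
qed

lemma inv_count_swap:
  assumes "finite A" "finite B" "A \<inter> B = {}"
  shows "inv_count A B + inv_count B A = card A * card B"
proof -
  let ?X = "{(s,t). s \<in> A \<and> t \<in> B \<and> t < s}"
  let ?Y = "{(s,t). s \<in> B \<and> t \<in> A \<and> t < s}"
  let ?Y' = "{(s,t). s \<in> A \<and> t \<in> B \<and> s < t}"
  have "?Y' = (\<lambda>(a,b). (b,a)) ` ?Y" by auto
  moreover have "inj_on (\<lambda>(a,b). (b,a)) ?Y" by (auto simp: inj_on_def)
  ultimately have cY: "card ?Y' = card ?Y" by (simp add: card_image)
  have "A \<times> B = ?X \<union> ?Y'" using assms by auto
  moreover have "?X \<inter> ?Y' = {}" by auto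
  ultimately have "card (A \<times> B) = card ?X + card ?Y'"
    using assms by (simp add: card_Un_disjoint inv_count_set_fin finite_subset[of ?Y' "A \<times> B"])
      (metis (no_types, lifting) card_Un_disjoint finite_SigmaI finite_Un)
  then show ?thesis using cY by (simp add: inv_count_def card_cartesian_product)
qed

lemma inv_count_le: "(\<And>s t. s \<in> A \<Longrightarrow> t \<in> B \<Longrightarrow> s \<le> t) \<Longrightarrow> inv_count A B = 0"
  unfolding inv_count_def by (rule card_eq_0_iff[THEN iffD2]) (auto dest: leD)

lemma inv_count_ge: "finite A \<Longrightarrow> (\<And>s. s \<in> A \<Longrightarrow> b < s) \<Longrightarrow> inv_count A {b} = card A"
proof -
  assume "finite A" "\<And>s. s \<in> A \<Longrightarrow> b < s"
  then have "{(s,t). s \<in> A \<and> t \<in> {b} \<and> t < s} = (\<lambda>s. (s,b)) ` A" by auto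
  then show ?thesis by (simp add: inv_count_def card_image inj_on_def)
qed

definition madd :: "mono \<Rightarrow> mono \<Rightarrow> mono" where
  "madd m n = (fst m + fst n, snd m \<union> snd n)"

lemma mmul_eq: "mmul m n = (if snd m \<inter> snd n = {} then SG (madd m n) ((-1) ^ inv_count (snd m) (snd n)) else 0)"
  by (simp add: mmul_def madd_def)

lemma tens_single[simp]: "tens (SG a c) (SG b d) = SG (a, b) (c * d)"
  by (simp add: tens_def)
lemma tens_zero1[simp]: "tens 0 y = 0" by (simp add: tens_def)
lemma tens_zero2[simp]: "tens x 0 = 0" by (simp add: tens_def)

definition tdisj :: "mono \<times> mono \<Rightarrow> mono \<times> mono \<Rightarrow> bool" where
  "tdisj u v \<longleftrightarrow> snd (fst u) \<inter> snd (fst v) = {} \<and> snd (snd u) \<inter> snd (snd v) = {}"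
definition tadd :: "mono \<times> mono \<Rightarrow> mono \<times> mono \<Rightarrow> mono \<times> mono" where
  "tadd u v = (madd (fst u) (fst v), madd (snd u) (snd v))"
definition tsg :: "mono \<times> mono \<Rightarrow> mono \<times> mono \<Rightarrow> nat" where
  "tsg u v = par (snd u) * par (fst v) + inv_count (snd (fst u)) (snd (fst v)) + inv_count (snd (snd u)) (snd (snd v))"

lemma tbas_eq: "tbas u v = (if tdisj u v then SG (tadd u v) ((-1) ^ tsg u v) else 0)"
  by (simp add: tbas_def mmul_eq tdisj_def tadd_def tsg_def power_add mult_ac)

definition tfin :: "mono \<times> mono \<Rightarrow> bool" where
  "tfin u \<longleftrightarrow> finite (snd (fst u)) \<and> finite (snd (snd u))"

lemma tadd_assoc: "tadd (tadd u v) w = tadd u (tadd v w)"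
  by (simp add: tadd_def madd_def add.assoc Un_assoc)
lemma tadd_comm: "tadd u v = tadd v u"
  by (simp add: tadd_def madd_def add.commute Un_commute)

lemma tsg_assoc:
  assumes "tfin u" "tfin v" "tfin w" "tdisj u v" "tdisj (tadd u v) w"
  shows "tsg u v + tsg (tadd u v) w = tsg v w + tsg u (tadd v w)"
proof -
  obtain e1 r1 e2 r2 e3 r3 where uvw: "u = (e1, r1)" "v = (e2, r2)" "w = (e3, r3)" by (metis prod.exhaust)
  note a = assms[unfolded uvw tfin_def tdisj_def tadd_def madd_def, simplified]
  show ?thesis
    using a unfolding uvw tsg_def tadd_def madd_def par_def
    by (simp add: inv_count_union1 inv_count_union2 card_Un_disjoint Int_Un_distrib Int_Un_distrib2 algebra_simps)
qed

lemma tbas_assoc: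
  assumes "tfin u" "tfin v" "tfin w"
  shows "lin (\<lambda>x. tbas x w) (tbas u v) = lin (tbas u) (tbas v w)"
proof -
  have d: "(tdisj u v \<and> tdisj (tadd u v) w) \<longleftrightarrow> (tdisj v w \<and> tdisj u (tadd v w))"
    by (auto simp: tdisj_def tadd_def madd_def)
  show ?thesis
  proof (cases "tdisj u v \<and> tdisj (tadd u v) w")
    case True
    then show ?thesis using d tsg_assoc[OF assms] True
      by (simp add: tbas_eq tadd_assoc flip: power_add)
  next
    case False
    then show ?thesis using d by (auto simp: tbas_eq)
  qed
qed

lemma tmul_alt: "tmul X Y = lin (\<lambda>u. lin (tbas u) Y) X"
  by (simp add: tmul_def bilin_alt)
lemma tmul_alt2: "tmul X Y = lin (\<lambda>v. lin (\<lambda>u. tbas u v) X) Y"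
  by (simp add: tmul_def bilin_alt2)

definition allfin :: "((mono \<times> mono) \<Rightarrow>\<^sub>0 'k::comm_ring_1) \<Rightarrow> bool" where
  "allfin X \<longleftrightarrow> (\<forall>u\<in>KS X. tfin u)"

lemma tmul_assoc:
  assumes "allfin X" "allfin Y" "allfin Z"
  shows "tmul (tmul X Y) Z = tmul X (tmul Y Z)"
proof -
  have "tmul (tmul X Y) Z = lin (\<lambda>u. lin (\<lambda>v. tmul (tbas u v) Z) Y) X"
    unfolding tmul_alt by (subst lin_comp, subst lin_comp, rule refl)
  also have "\<dots> = lin (\<lambda>u. lin (\<lambda>v. lin (\<lambda>z. lin (tbas u) (tbas v z)) Z) Y) X"
  proof (rule lin_cong, rule lin_cong)
    fix u v assume u: "u \<in> KS X" and v: "v \<in> KS Y"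
    show "tmul (tbas u v) Z = lin (\<lambda>z. lin (tbas u) (tbas v z)) Z"
      unfolding tmul_alt2
      by (rule lin_cong, rule tbas_assoc) (use assms u v in \<open>auto simp: allfin_def\<close>)
  qed
  also have "\<dots> = tmul X (tmul Y Z)"
    by (simp add: tmul_alt[of X] tmul_alt[of Y] lin_comp)
  finally show ?thesis .
qed

lemma tsg_comm:
  assumes "tfin u" "tfin v" "tdisj u v"
  shows "tsg u v + tsg v u = (card (snd (fst u)) + card (snd (snd u))) * (card (snd (fst v)) + card (snd (snd v)))"
proof -
  obtain e1 r1 e2 r2 where uv: "u = (e1, r1)" "v = (e2, r2)" by (metis prod.exhaust)
  note a = assms[unfolded uv tfin_def tdisj_def, simplified]
  have "inv_count (snd e1) (snd e2) + inv_count (snd e2) (snd e1) = card (snd e1) * card (snd e2)"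
    using a by (intro inv_count_swap) auto
  moreover have "inv_count (snd r1) (snd r2) + inv_count (snd r2) (snd r1) = card (snd r1) * card (snd r2)"
    using a by (intro inv_count_swap) auto
  ultimately show ?thesis unfolding uv tsg_def par_def by (simp add: algebra_simps)
qed

definition tpar :: "mono \<times> mono \<Rightarrow> nat" where
  "tpar u = card (snd (fst u)) + card (snd (snd u))"

lemma neg1_pow_swap: "((-1::'a::comm_ring_1) ^ a) = (-1) ^ (a + b) * (-1) ^ b"
proof -
  have "(-1::'a) ^ (a + b) * (-1) ^ b = (-1) ^ a * ((-1) ^ b * (-1) ^ b)" by (simp add: power_add mult_ac)
  also have "(-1::'a) ^ b * (-1) ^ b = 1" by (simp flip: power_add)
  finally show ?thesis by simp
qed

lemma tbas_comm:
  assumes "tfin u" "tfin v"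
  shows "tbas u v = sc ((-1) ^ (tpar u * tpar v)) (tbas v u)"
proof (cases "tdisj u v")
  case True
  then have "tdisj v u" by (auto simp: tdisj_def)
  then show ?thesis using True tsg_comm[OF assms True] neg1_pow_swap[of "tsg u v" "tsg v u", where 'a='a]
    by (simp add: tbas_eq tadd_comm tpar_def)
next
  case False
  then have "\<not> tdisj v u" by (auto simp: tdisj_def)
  then show ?thesis using False by (simp add: tbas_eq)
qed

lemma tmul_anticomm:
  assumes "\<forall>u\<in>KS X. tfin u \<and> odd (tpar u)" "\<forall>u\<in>KS Y. tfin u \<and> odd (tpar u)"
  shows "tmul X Y = - tmul Y X"
proof -
  have "tmul X Y = lin (\<lambda>u. lin (\<lambda>v. - tbas v u) Y) X"
    unfolding tmul_alt
  proof (rule lin_cong, rule lin_cong)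
    fix u v assume "u \<in> KS X" "v \<in> KS Y"
    then show "tbas u v = - tbas v u" using assms tbas_comm[of u v]
      by (auto simp: sc_uminus_left)
  qed
  also have "\<dots> = - tmul Y X"
    by (simp add: tmul_alt2[of Y X] lin_minus lin_sc_fun[of "-1", simplified sc_uminus_left sc_one, symmetric])
  finally show ?thesis .
qed


lemma keys_lin: "KS (lin f v) \<subseteq> (\<Union>b\<in>KS v. KS (f b))"
proof
  fix c assume "c \<in> KS (lin f v)"
  then have "(\<Sum>b\<in>KS v. LK v b * LK (f b) c) \<noteq> 0" by (simp add: in_keys_iff lookup_lin)
  then obtain b where "b \<in> KS v" "LK (f b) c \<noteq> 0" by (metis (no_types, lifting) mult_zero_right sum.neutral)
  then show "c \<in> (\<Union>b\<in>KS v. KS (f b))" by (auto simp: in_keys_iff)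
qed

lemma keys_lin_P: "(\<And>b c. b \<in> KS v \<Longrightarrow> c \<in> KS (f b) \<Longrightarrow> P c) \<Longrightarrow> c \<in> KS (lin f v) \<Longrightarrow> P c"
proof -
  assume a: "\<And>b c. b \<in> KS v \<Longrightarrow> c \<in> KS (f b) \<Longrightarrow> P c" and c: "c \<in> KS (lin f v)"
  from c keys_lin[of f v] obtain b where "b \<in> KS v" "c \<in> KS (f b)" by blast
  then show "P c" by (rule a)
qed

lemma keys_sum_sub: "KS (sum g A) \<subseteq> (\<Union>a\<in>A. KS (g a))"
proof (induction A rule: infinite_finite_induct)
  case (insert x F)
  then show ?case using keys_add[of "g x" "sum g F"] by auto
qed auto

lemma keys_bilin_P: "(\<And>a b c. a \<in> KS u \<Longrightarrow> b \<in> KS v \<Longrightarrow> c \<in> KS (f a b) \<Longrightarrow> P c) \<Longrightarrow> c \<in> KS (bilin f u v) \<Longrightarrow> P c"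
proof -
  assume a: "\<And>a b c. a \<in> KS u \<Longrightarrow> b \<in> KS v \<Longrightarrow> c \<in> KS (f a b) \<Longrightarrow> P c" and c: "c \<in> KS (bilin f u v)"
  show "P c"
  proof -
    from c keys_lin[of "\<lambda>a. lin (f a) v" u] obtain x where x: "x \<in> KS u" "c \<in> KS (lin (f x) v)"
      unfolding bilin_alt by blast
    from x(2) keys_lin[of "f x" v] obtain y where "y \<in> KS v" "c \<in> KS (f x y)" by blast
    with x(1) show ?thesis by (rule a)
  qed
qed

section \<open>weights\<close>

definition wz :: "nat \<Rightarrow> (nat \<Rightarrow>\<^sub>0 nat) \<Rightarrow> nat" where
  "wz p a = (\<Sum>k\<in>KS a. LK a k * p ^ k)"

lemma wz_superset: "finite K \<Longrightarrow> KS a \<subseteq> K \<Longrightarrow> wz p a = (\<Sum>k\<in>K. LK a k * p ^ k)"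
  unfolding wz_def by (rule sum.mono_neutral_left) (auto simp: in_keys_iff)

lemma wz_add: "wz p (a + b) = wz p a + wz p b"
proof -
  let ?K = "KS a \<union> KS b"
  have "wz p (a + b) = (\<Sum>k\<in>?K. LK (a+b) k * p ^ k)"
    using keys_add[of a b] by (intro wz_superset) auto
  also have "\<dots> = (\<Sum>k\<in>?K. LK a k * p ^ k) + (\<Sum>k\<in>?K. LK b k * p ^ k)"
    by (simp add: lookup_add algebra_simps sum.distrib)
  also have "\<dots> = wz p a + wz p b" by (subst (1 2) wz_superset[where K="?K"]) auto
  finally show ?thesis .
qed

lemma wz_zero[simp]: "wz p 0 = 0" by (simp add: wz_def)
lemma wz_single[simp]: "wz p (SG k e) = e * p ^ k"
  by (cases "e = 0") (auto simp: wz_def)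

lemma wt_wz: "wt p m = wz p (fst m) + (\<Sum>s\<in>snd m. p ^ s)"
  by (simp add: wt_def wz_def)

definition wt2 :: "nat \<Rightarrow> mono \<Rightarrow> nat" where
  "wt2 p m = wt p (fst m, snd m - {2})"

lemma wt2_alt: "wt2 p m = wz p (fst m) + (\<Sum>s\<in>snd m - {2}. p ^ s)"
  by (simp add: wt2_def wt_wz)

lemma wt2_madd:
  assumes "finite (snd m)" "finite (snd n)" "snd m \<inter> snd n = {}"
  shows "wt2 p (madd m n) = wt2 p m + wt2 p n"
proof -
  have "snd (madd m n) - {2} = (snd m - {2}) \<union> (snd n - {2})" by (auto simp: madd_def)
  then show ?thesis using assms
    by (simp add: wt2_alt wz_add madd_def) (subst sum.union_disjoint, auto)
qed

lemma wt2_zero[simp]: "wt2 p (0, {}) = 0" by (simp add: wt2_alt)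

lemma mAE1_dvd:
  assumes "mAE1 m"
  shows "p dvd wt2 p m"
proof -
  have "p dvd wz p (fst m)" unfolding wz_def
  proof (intro dvd_sum)
    fix k assume "k \<in> KS (fst m)"
    then have "k \<noteq> 0" using assms unfolding mAE1_def by metis
    then show "p dvd LK (fst m) k * p ^ k" by (simp add: dvd_power)
  qed
  moreover have "p dvd (\<Sum>s\<in>snd m - {2}. p ^ s)"
    using assms by (intro dvd_sum) (auto simp: mAE1_def intro!: dvd_power[of _ p])
  ultimately show ?thesis by (simp add: wt2_alt)
qed

lemma mAE1_madd: "mAE1 m \<Longrightarrow> mAE1 n \<Longrightarrow> mAE1 (madd m n)"
  by (auto simp: mAE1_def madd_def dest: keys_add[THEN subsetD])

lemma mAE1_zero[simp]: "mAE1 (0, {})" by (simp add: mAE1_def)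


definition kb :: "mono \<Rightarrow> mono \<times> mono" where
  "kb m = (if 2 \<in> snd m then ((fst m, snd m - {2}), tau 2) else (m, (0, {})))"
definition ksg :: "mono \<Rightarrow> 'k::field" where
  "ksg m = (if 2 \<in> snd m then (-1) ^ inv_count (snd m - {2}) {2} else 1)"

lemma kappa_mono_eq: "kappa_mono m = SG (kb m) (ksg m)"
  by (simp add: kappa_mono_def kb_def ksg_def)

lemma kb_inj: "inj kb"
  by (auto simp: inj_def kb_def tau_def split: if_splits)

lemma fst_kb[simp]: "fst (kb m) = (fst m, snd m - {2})" by (simp add: kb_def)
lemma snd_kb: "snd (kb m) \<in> {(0, {}), tau 2}" by (simp add: kb_def)

lemma ksg_nz[simp]: "ksg m \<noteq> (0::'k::field)" by (simp add: ksg_def)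
lemma ksg_sq[simp]: "ksg m * ksg m = (1::'k::field)"
  by (simp add: ksg_def flip: power_add) 

lemma lookup_kappa_kb: "LK (kappa (x :: mono \<Rightarrow>\<^sub>0 'k::field)) (kb m) = ksg m * LK x m"
proof -
  have "LK (kappa x) (kb m) = (\<Sum>b\<in>KS x. LK x b * (if b = m then ksg m else 0))"
    unfolding kappa_def lookup_lin kappa_mono_eq
    by (intro sum.cong refl) (auto simp: lookup_single when_def dest: injD[OF kb_inj])
  also have "\<dots> = ksg m * LK x m"
    by (cases "m \<in> KS x") (auto simp: if_distrib in_keys_iff cong: if_cong)
  finally show ?thesis .
qed

lemma lookup_kappa_notin: "c \<notin> range kb \<Longrightarrow> LK (kappa (x :: mono \<Rightarrow>\<^sub>0 'k::field)) c = 0"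
  unfolding kappa_def lookup_lin
  by (intro sum.neutral) (auto simp: lookup_single when_def kappa_mono_eq)

lemma keys_kappa: "KS (kappa (x :: mono \<Rightarrow>\<^sub>0 'k::field)) = kb ` KS x"
proof
  show "KS (kappa x) \<subseteq> kb ` KS x"
  proof
    fix c assume c: "c \<in> KS (kappa x)"
    then have "c \<in> range kb" using lookup_kappa_notin by (fastforce simp: in_keys_iff)
    then obtain m where "c = kb m" by auto
    with c show "c \<in> kb ` KS x" by (auto simp: in_keys_iff lookup_kappa_kb)
  qed
  show "kb ` KS x \<subseteq> KS (kappa x)" by (auto simp: in_keys_iff lookup_kappa_kb)
qed

lemma kappa_inj: "kappa x = kappa (y :: mono \<Rightarrow>\<^sub>0 'k::field) \<Longrightarrow> x = y"
proof (rule poly_mapping_eqI)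
  fix m assume "kappa x = kappa y"
  then have "ksg m * LK x m = ksg m * (LK y m :: 'k)" by (metis lookup_kappa_kb)
  then show "LK x m = LK y m" by simp
qed

lemma kappa_add: "kappa (x + y) = kappa x + kappa y" by (simp add: kappa_def lin_add)
lemma kappa_sc: "kappa (sc c x) = sc c (kappa x)" by (simp add: kappa_def lin_sc)
lemma kappa_sum: "kappa (sum g A) = (\<Sum>a\<in>A. kappa (g a))" by (simp add: kappa_def lin_sum)
lemma kappa_zero[simp]: "kappa 0 = 0" by (simp add: kappa_def)

section \<open>AE1 and filtration\<close>

definition FilC :: "nat \<Rightarrow> nat \<Rightarrow> (mono \<Rightarrow>\<^sub>0 'k::field) \<Rightarrow> bool" where
  "FilC p j x \<longleftrightarrow> (\<forall>m\<in>KS x. mAE1 m \<and> p * j \<le> wt2 p m)"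

lemma mAE1_mAE2_kb: "mAE1 m \<Longrightarrow> mAE2 (fst m, snd m - {2})"
  by (auto simp: mAE1_def mAE2_def)

lemma kappa_TT: "(x :: mono \<Rightarrow>\<^sub>0 'k::field) \<in> AE1 \<Longrightarrow> kappa x \<in> TT"
  using snd_kb by (auto simp: AE1_def TT_def keys_kappa mAE1_mAE2_kb)

lemma Fil_iff:
  assumes "p > 0"
  shows "x \<in> Fil p j \<longleftrightarrow> FilC p j x"
proof -
  have "(\<exists>k\<ge>j. wt2 p m = p * k) \<longleftrightarrow> p * j \<le> wt2 p m" if "mAE1 m" for m
    using mAE1_dvd[OF that, of p] assms by (auto elim!: dvdE)
  then show ?thesis
    by (auto simp: Fil_def FilC_def TF_def AE1_def keys_kappa wt2_def intro: kappa_TT[unfolded AE1_def])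
qed

lemma FilC_add: "FilC p j x \<Longrightarrow> FilC p j y \<Longrightarrow> FilC p j (x + y)"
  by (auto simp: FilC_def dest: keys_add[THEN subsetD])
lemma FilC_sc: "FilC p j x \<Longrightarrow> FilC p j (sc c x)"
  by (auto simp: FilC_def dest: keys_sc[THEN subsetD])
lemma FilC_uminus: "FilC p j x \<Longrightarrow> FilC p j (- x)"
  by (auto simp: FilC_def)
lemma FilC_diff: "FilC p j x \<Longrightarrow> FilC p j y \<Longrightarrow> FilC p j (x - y)"
  by (metis FilC_add FilC_uminus diff_conv_add_uminus)
lemma FilC_zero[simp]: "FilC p j 0" by (simp add: FilC_def)
lemma FilC_sum: "(\<And>a. a \<in> A \<Longrightarrow> FilC p j (g a)) \<Longrightarrow> FilC p j (sum g A)"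
  by (induction A rule: infinite_finite_induct) (auto intro: FilC_add)
lemma FilC_mono: "FilC p j x \<Longrightarrow> i \<le> j \<Longrightarrow> FilC p i x"
  by (auto simp: FilC_def) (meson le_trans mult_le_mono2)

section \<open>homogeneous parts\<close>

definition H :: "nat \<Rightarrow> nat \<Rightarrow> (mono \<Rightarrow>\<^sub>0 'k::field) \<Rightarrow> (mono \<Rightarrow>\<^sub>0 'k)" where
  "H p j = lin (\<lambda>m. if wt2 p m = p * j then SG m 1 else 0)"

lemma lookup_H: "LK (H p j x) m = (if wt2 p m = p * j then LK x m else 0)"
proof -
  have "LK (H p j x) m = (\<Sum>b\<in>KS x. LK x b * (if b = m \<and> wt2 p m = p * j then 1 else 0))"
    unfolding H_def lookup_lin by (intro sum.cong refl) (auto simp: lookup_single when_def)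
  also have "\<dots> = (if wt2 p m = p * j then LK x m else 0)"
    by (cases "m \<in> KS x") (auto simp: if_distrib in_keys_iff cong: if_cong)
  finally show ?thesis .
qed

lemma keys_H: "KS (H p j x) = {m\<in>KS x. wt2 p m = p * j}"
  by (auto simp: in_keys_iff lookup_H split: if_splits)

lemma H_add: "H p j (x + y) = H p j x + H p j y" by (simp add: H_def lin_add)
lemma H_sc: "H p j (sc c x) = sc c (H p j x)" by (simp add: H_def lin_sc)
lemma H_diff: "H p j (x - y) = H p j x - H p j y" by (simp add: H_def lin_diff)
lemma H_sum: "H p j (sum g A) = (\<Sum>a\<in>A. H p j (g a))" by (simp add: H_def lin_sum)
lemma H_zero[simp]: "H p j 0 = 0" by (simp add: H_def)

lemma H_H: "p > 0 \<Longrightarrow> H p i (H p j x) = (if i = j then H p j x else 0)"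
  by (rule poly_mapping_eqI) (auto simp: lookup_H)

lemma FilC_H: "FilC p j x \<Longrightarrow> FilC p j (H p j x)"
  by (auto simp: FilC_def keys_H)

lemma FilC_Suc_iff:
  assumes "p > 0" "FilC p j x"
  shows "FilC p (Suc j) x \<longleftrightarrow> H p j x = 0"
proof
  assume a: "FilC p (Suc j) x"
  have "\<forall>m\<in>KS x. wt2 p m \<noteq> p * j"
  proof
    fix m assume "m \<in> KS x"
    then have "p * Suc j \<le> wt2 p m" using a by (auto simp: FilC_def)
    then show "wt2 p m \<noteq> p * j" using assms(1) by auto
  qed
  then have "KS (H p j x) = {}" unfolding keys_H by (metis (mono_tags, lifting) empty_Collect_eq)
  then show "H p j x = 0" by simp
next
  assume h: "H p j x = 0"
  show "FilC p (Suc j) x" unfolding FilC_def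
  proof
    fix m assume m: "m \<in> KS x"
    then have a: "mAE1 m" "p * j \<le> wt2 p m" using assms by (auto simp: FilC_def)
    have "m \<notin> KS (H p j x)" using h by simp
    then have "wt2 p m \<noteq> p * j" using m unfolding keys_H by blast
    moreover obtain k where "wt2 p m = p * k" using mAE1_dvd[OF a(1), of p] by (auto elim: dvdE)
    ultimately have "Suc j \<le> k" using a assms by auto
    then have "p * Suc j \<le> p * k" by (rule mult_le_mono2)
    then show "mAE1 m \<and> p * Suc j \<le> wt2 p m" using a \<open>wt2 p m = p * k\<close> by auto
  qed
qed

lemma FilC_diff_H: "p > 0 \<Longrightarrow> FilC p j x \<Longrightarrow> FilC p (Suc j) (x - H p j x)"
  by (simp add: FilC_Suc_iff FilC_diff FilC_H H_diff H_H)

lemma H_below: "FilC p j x \<Longrightarrow> i < j \<Longrightarrow> p > 0 \<Longrightarrow> H p i x = 0"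
  by (auto simp: FilC_def keys_H simp flip: keys_eq_empty)

lemma sum_H:
  assumes "p > 0" "finite J" "\<And>m. m \<in> KS x \<Longrightarrow> \<exists>j\<in>J. wt2 p m = p * j"
  shows "(\<Sum>j\<in>J. H p j x) = x"
proof (rule poly_mapping_eqI)
  fix m
  show "LK (\<Sum>j\<in>J. H p j x) m = LK x m"
  proof (cases "m \<in> KS x")
    case True
    then obtain j where j: "j \<in> J" "wt2 p m = p * j" using assms(3)[OF True] by blast
    then have "(\<Sum>i\<in>J. LK (H p i x) m) = (\<Sum>i\<in>J. if i = j then LK x m else 0)"
      using assms(1) by (intro sum.cong refl) (auto simp: lookup_H)
    then show ?thesis using j assms(2) by (simp add: lookup_sum)
  next
    case False
    then have z: "LK x m = 0" by (simp add: in_keys_iff)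
    have "\<forall>i. LK (H p i x) m = 0" by (simp add: lookup_H z)
    then show ?thesis by (simp add: lookup_sum z)
  qed
qed

lemma prj_kappa: "prj p j (kappa x) = kappa (H p j x)"
  unfolding prj_def kappa_def H_def lin_comp
  by (rule lin_cong) (simp add: kappa_mono_eq wt2_def)


lemma sub3: "B \<subseteq> {2..} \<Longrightarrow> 2 \<notin> B \<Longrightarrow> B \<subseteq> {3::nat..}"
  by (auto simp: subset_eq) (metis Suc_leI le_neq_implies_less numeral_2_eq_2 numeral_3_eq_3)


lemma lin_bilin: "lin h (bilin f u v) = bilin (\<lambda>a b. lin h (f a b)) u v"
  by (simp add: bilin_alt lin_comp)

lemma bilin_lin1: "bilin f (lin g u) w = lin (\<lambda>a. bilin f (g a) w) u"
  by (simp add: bilin_alt lin_comp)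
lemma bilin_lin2: "bilin f w (lin h v) = lin (\<lambda>b. bilin f w (h b)) v"
  by (simp add: bilin_alt2 lin_comp)

lemma bilin_lin: "bilin f (lin g u) (lin h v) = bilin (\<lambda>a b. bilin f (g a) (h b)) u v"
proof -
  have "bilin f (lin g u) (lin h v) = lin (\<lambda>a. bilin f (g a) (lin h v)) u" by (rule bilin_lin1)
  also have "\<dots> = lin (\<lambda>a. lin (\<lambda>b. bilin f (g a) (h b)) v) u" by (simp only: bilin_lin2)
  also have "\<dots> = bilin (\<lambda>a b. bilin f (g a) (h b)) u v" by (simp only: bilin_alt)
  finally show ?thesis .
qed

lemma bilin_cong: "(\<And>a b. a \<in> KS u \<Longrightarrow> b \<in> KS v \<Longrightarrow> f a b = g a b) \<Longrightarrow> bilin f u v = bilin g u v"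
  by (simp add: bilin_def)

lemma neg1_pow_eq: "even (a + b) \<Longrightarrow> ((-1::'a::comm_ring_1) ^ a) = (-1) ^ b"
  by (subst neg1_pow_swap[of a b]) simp

lemma mAE1_mmul_keys: "mAE1 a \<Longrightarrow> mAE1 b \<Longrightarrow> c \<in> KS (mmul a b :: mono \<Rightarrow>\<^sub>0 'k::field) \<Longrightarrow>
   c = madd a b \<and> snd a \<inter> snd b = {}"
  by (auto simp: mmul_eq split: if_splits)

lemma FilC_vmul:
  assumes "FilC p i x" "FilC p k (y :: mono \<Rightarrow>\<^sub>0 'k::field)"
  shows "FilC p (i + k) (vmul x y)"
  unfolding FilC_def
proof
  fix c assume "c \<in> KS (vmul x y)"
  then show "mAE1 c \<and> p * (i + k) \<le> wt2 p c"
    unfolding vmul_def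
  proof (rule keys_bilin_P[rotated])
    fix a b c assume ab: "a \<in> KS x" "b \<in> KS y" "c \<in> KS (mmul a b :: mono \<Rightarrow>\<^sub>0 'k)"
    then have a: "mAE1 a" "p * i \<le> wt2 p a" "mAE1 b" "p * k \<le> wt2 p b" using assms by (auto simp: FilC_def)
    then have "c = madd a b" "snd a \<inter> snd b = {}" using mAE1_mmul_keys ab(3) by blast+
    moreover have "wt2 p c = wt2 p a + wt2 p b" using a \<open>c = madd a b\<close> \<open>snd a \<inter> snd b = {}\<close>
      by (simp add: wt2_madd mAE1_def)
    ultimately show "mAE1 c \<and> p * (i + k) \<le> wt2 p c"
      using a by (simp add: mAE1_madd add_mono algebra_simps)
  qed
qed

lemma H_vmul:
  assumes "p > 0" "FilC p i x" "FilC p k (y :: mono \<Rightarrow>\<^sub>0 'k::field)"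
  shows "H p (i + k) (vmul x y) = vmul (H p i x) (H p k y)"
proof -
  have "H p (i + k) (vmul x y) = bilin (\<lambda>a b. H p (i + k) (mmul a b)) x y"
    by (simp add: vmul_def H_def lin_bilin)
  also have "\<dots> = bilin (\<lambda>a b. bilin mmul (if wt2 p a = p * i then SG a 1 else 0) (if wt2 p b = p * k then SG b 1 else 0)) x y"
  proof (rule bilin_cong)
    fix a b assume ab: "a \<in> KS x" "b \<in> KS y"
    then have a: "mAE1 a" "p * i \<le> wt2 p a" "mAE1 b" "p * k \<le> wt2 p b" using assms by (auto simp: FilC_def)
    show "H p (i + k) (mmul a b) = bilin mmul (if wt2 p a = p * i then SG a 1 else 0) (if wt2 p b = p * k then SG b 1 else 0)"
    proof (cases "snd a \<inter> snd b = {}")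
      case True
      then have "wt2 p (madd a b) = wt2 p a + wt2 p b" using a by (intro wt2_madd) (auto simp: mAE1_def)
      moreover have "(wt2 p a + wt2 p b = p * (i + k)) \<longleftrightarrow> (wt2 p a = p * i \<and> wt2 p b = p * k)"
        using a by (auto simp: algebra_simps)
      ultimately show ?thesis using True
        by (auto simp: mmul_eq H_def)
    next
      case False
      then show ?thesis by (auto simp: mmul_eq)
    qed
  qed
  also have "\<dots> = vmul (H p i x) (H p k y)"
    by (simp add: vmul_def H_def bilin_lin)
  finally show ?thesis .
qed

lemma inv_count_2_left: "B \<subseteq> {3..} \<Longrightarrow> inv_count {2} B = 0"
  by (rule inv_count_le) auto

lemma inv_count_2_right: "finite A \<Longrightarrow> A \<subseteq> {3..} \<Longrightarrow> inv_count A {2} = card A"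
  by (rule inv_count_ge) auto

lemma kappa_mmul:
  assumes "mAE1 a" "mAE1 b"
  shows "kappa (mmul a b) = sc (ksg a * ksg b) (tbas (kb a) (kb b) :: (mono \<times> mono) \<Rightarrow>\<^sub>0 'k::field)"
proof -
  obtain fa A fb B where ab: "a = (fa, A)" "b = (fb, B)" by (metis prod.exhaust)
  have A: "finite A" "A \<subseteq> {2..}" and B: "finite B" "B \<subseteq> {2..}" using assms ab by (auto simp: mAE1_def)
  have tau2: "tau 2 = (0, {2})" by (simp add: tau_def)
  show ?thesis
  proof (cases "2 \<in> A")
    case A2: True
    let ?A = "A - {2}"
    have A': "finite ?A" "?A \<subseteq> {3..}" "A = insert 2 ?A" "2 \<notin> ?A" using A A2 by auto
    show ?thesis
    proof (cases "2 \<in> B")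
      case True
      then show ?thesis using A2 ab
        by (auto simp: mmul_eq kb_def tbas_eq tdisj_def tau2)
    next
      case B2: False
      have B3: "B \<subseteq> {3..}" using B B2 by (simp add: sub3)
      show ?thesis
      proof (cases "A \<inter> B = {}")
        case False
        then have "?A \<inter> B \<noteq> {}" using B2 by auto
        then show ?thesis using False A2 B2 ab
          by (auto simp: mmul_eq kb_def tbas_eq tdisj_def tau2)
      next
        case disj: True
        have d2: "?A \<inter> B = {}" using disj by auto
        have e1: "inv_count A B = inv_count ?A B"
          using inv_count_union1[of "{2}" ?A B] A' B B3 by (simp add: inv_count_2_left)
        have e2: "inv_count (A \<union> B - {2}) {2} = card ?A + card B"
        proof -
          have "A \<union> B - {2} = ?A \<union> B" using B2 by auto
          then show ?thesis using A' B B3 d2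
            by (simp add: inv_count_2_right card_Un_disjoint)
        qed
        have lhs: "kappa (mmul a b) = SG ((fa + fb, ?A \<union> B), tau 2) (((-1::'k) ^ inv_count ?A B) * (-1) ^ (card ?A + card B))"
          using disj A2 ab e1 e2 B2 by (simp add: mmul_eq madd_def kappa_def kappa_mono_def Un_Diff)
        have rhs: "tbas (kb a) (kb b) = SG ((fa + fb, ?A \<union> B), tau 2) ((-1::'k) ^ (card B + inv_count ?A B))"
          using A2 B2 ab d2 by (simp add: kb_def tbas_eq tdisj_def tadd_def madd_def tsg_def par_def tau2)
        show ?thesis using lhs rhs A2 B2 ab A'
          by (simp add: ksg_def inv_count_2_right power_add mult_ac)
      qed
    qed
  next
    case A2: False
    have A3: "A \<subseteq> {3..}" using A A2 by (simp add: sub3)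
    show ?thesis
    proof (cases "2 \<in> B")
      case B2: True
      let ?B = "B - {2}"
      have B': "finite ?B" "?B \<subseteq> {3..}" "B = insert 2 ?B" "2 \<notin> ?B" using B B2 by auto
      show ?thesis
      proof (cases "A \<inter> B = {}")
        case False
        then have "A \<inter> ?B \<noteq> {}" using A2 by auto
        then show ?thesis using False A2 B2 ab
          by (auto simp: mmul_eq kb_def tbas_eq tdisj_def tau2)
      next
        case disj: True
        have d2: "A \<inter> ?B = {}" using disj by auto
        have e1: "inv_count A B = inv_count A ?B + card A"
          using inv_count_union2[of A "{2}" ?B] B' A A3 by (simp add: inv_count_2_right)
        have e2: "inv_count (A \<union> B - {2}) {2} = card A + card ?B"
        proof -
          have "A \<union> B - {2} = A \<union> ?B" using A2 by auto
          then show ?thesis using B' A A3 d2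
            by (simp add: inv_count_2_right card_Un_disjoint)
        qed
        have lhs: "kappa (mmul a b) = SG ((fa + fb, A \<union> ?B), tau 2) (((-1::'k) ^ (inv_count A ?B + card A)) * (-1) ^ (card A + card ?B))"
          using disj B2 ab e1 e2 A2 by (simp add: mmul_eq madd_def kappa_def kappa_mono_def Un_Diff)
        have rhs: "tbas (kb a) (kb b) = SG ((fa + fb, A \<union> ?B), tau 2) ((-1::'k) ^ (inv_count A ?B))"
          using A2 B2 ab d2 by (simp add: kb_def tbas_eq tdisj_def tadd_def madd_def tsg_def par_def tau2)
        have "((-1::'k) ^ (inv_count A ?B + card A)) * (-1) ^ (card A + card ?B) = (-1) ^ (inv_count A ?B + card ?B)"
          by (simp flip: power_add, rule neg1_pow_eq) auto
        then show ?thesis using lhs rhs A2 B2 ab B'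
          by (simp add: ksg_def inv_count_2_right power_add mult_ac)
      qed
    next
      case B2: False
      show ?thesis
        using A2 B2 ab by (auto simp: mmul_eq kb_def tbas_eq tdisj_def tadd_def madd_def tsg_def par_def kappa_def kappa_mono_def ksg_def)
    qed
  qed
qed

lemma kappa_vmul:
  assumes "x \<in> AE1" "(y :: mono \<Rightarrow>\<^sub>0 'k::field) \<in> AE1"
  shows "kappa (vmul x y) = tmul (kappa x) (kappa y)"
proof -
  have "kappa (vmul x y) = bilin (\<lambda>a b. kappa (mmul a b)) x y"
    by (simp add: vmul_def kappa_def lin_bilin)
  also have "\<dots> = bilin (\<lambda>a b. bilin tbas (kappa_mono a) (kappa_mono b)) x y"
    by (rule bilin_cong) (use assms in \<open>simp add: AE1_def kappa_mmul kappa_mono_eq\<close>)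
  also have "\<dots> = tmul (kappa x) (kappa y)"
    by (simp add: tmul_def kappa_def bilin_lin)
  finally show ?thesis .
qed


section \<open>right-weight restriction on E(2) (x) V\<close>

definition H' :: "nat \<Rightarrow> nat \<Rightarrow> ((mono \<times> mono) \<Rightarrow>\<^sub>0 'k::field) \<Rightarrow> ((mono \<times> mono) \<Rightarrow>\<^sub>0 'k)" where
  "H' p w = lin (\<lambda>u. if wt2 p (snd u) = w then SG u 1 else 0)"

definition RA :: "nat \<Rightarrow> nat \<Rightarrow> ((mono \<times> mono) \<Rightarrow>\<^sub>0 'k::field) \<Rightarrow> bool" where
  "RA p w X \<longleftrightarrow> (\<forall>u\<in>KS X. tfin u \<and> w \<le> wt2 p (snd u))"

lemma lookup_H': "LK (H' p w X) u = (if wt2 p (snd u) = w then LK X u else 0)"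
proof -
  have "LK (H' p w X) u = (\<Sum>b\<in>KS X. LK X b * (if b = u \<and> wt2 p (snd u) = w then 1 else 0))"
    unfolding H'_def lookup_lin by (intro sum.cong refl) (auto simp: lookup_single when_def)
  also have "\<dots> = (if wt2 p (snd u) = w then LK X u else 0)"
    by (cases "u \<in> KS X") (auto simp: if_distrib in_keys_iff cong: if_cong)
  finally show ?thesis .
qed

lemma keys_H': "KS (H' p w X) = {u\<in>KS X. wt2 p (snd u) = w}"
  by (auto simp: in_keys_iff lookup_H' split: if_splits)

lemma H'_id: "(\<And>u. u \<in> KS X \<Longrightarrow> wt2 p (snd u) = w) \<Longrightarrow> H' p w X = X"
  by (rule poly_mapping_eqI) (auto simp: lookup_H' in_keys_iff)

lemma H'_add: "H' p w (X + Y) = H' p w X + H' p w Y" by (simp add: H'_def lin_add)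
lemma H'_zero[simp]: "H' p w 0 = 0" by (simp add: H'_def)
lemma H'_single: "H' p w (SG u c) = (if wt2 p (snd u) = w then SG u c else 0)" by (simp add: H'_def)

lemma keys_tmul_P:
  assumes "\<And>u v. u \<in> KS X \<Longrightarrow> v \<in> KS Y \<Longrightarrow> tdisj u v \<Longrightarrow> P (tadd u v)"
  shows "c \<in> KS (tmul X Y) \<Longrightarrow> P c"
  unfolding tmul_def
  by (rule keys_bilin_P) (use assms in \<open>auto simp: tbas_eq split: if_splits\<close>)

lemma tfin_tadd: "tfin u \<Longrightarrow> tfin v \<Longrightarrow> tfin (tadd u v)"
  by (auto simp: tfin_def tadd_def madd_def)

lemma wt2_tadd: "tfin u \<Longrightarrow> tfin v \<Longrightarrow> tdisj u v \<Longrightarrow> wt2 p (snd (tadd u v)) = wt2 p (snd u) + wt2 p (snd v)"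
  by (auto simp: tfin_def tadd_def tdisj_def intro!: wt2_madd)

lemma RA_tmul:
  assumes "RA p a X" "RA p b Y" shows "RA p (a + b) (tmul X Y)"
  unfolding RA_def
proof
  fix c assume "c \<in> KS (tmul X Y)"
  then show "tfin c \<and> a + b \<le> wt2 p (snd c)"
    by (rule keys_tmul_P[where P="\<lambda>c. tfin c \<and> a + b \<le> wt2 p (snd c)", rotated])
      (use assms in \<open>auto simp: RA_def tfin_tadd wt2_tadd add_mono\<close>)
qed

lemma RA_allfin: "RA p a X \<Longrightarrow> allfin X"
  by (auto simp: RA_def allfin_def)

lemma H'_tmul:
  assumes "RA p a X" "RA p b Y"
  shows "H' p (a + b) (tmul X Y) = tmul (H' p a X) (H' p b Y)"
proof -
  have "H' p (a + b) (tmul X Y) = bilin (\<lambda>u v. H' p (a + b) (tbas u v)) X Y"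
    by (simp add: tmul_def H'_def lin_bilin)
  also have "\<dots> = bilin (\<lambda>u v. bilin tbas (if wt2 p (snd u) = a then SG u 1 else 0) (if wt2 p (snd v) = b then SG v 1 else 0)) X Y"
  proof (rule bilin_cong)
    fix u v assume uv: "u \<in> KS X" "v \<in> KS Y"
    then have f: "tfin u" "tfin v" "a \<le> wt2 p (snd u)" "b \<le> wt2 p (snd v)" using assms by (auto simp: RA_def)
    show "H' p (a + b) (tbas u v) = bilin tbas (if wt2 p (snd u) = a then SG u 1 else 0) (if wt2 p (snd v) = b then SG v 1 else 0)"
    proof (cases "tdisj u v")
      case True
      then have "wt2 p (snd (tadd u v)) = wt2 p (snd u) + wt2 p (snd v)" using f by (simp add: wt2_tadd)
      moreover have "(wt2 p (snd u) + wt2 p (snd v) = a + b) \<longleftrightarrow> (wt2 p (snd u) = a \<and> wt2 p (snd v) = b)"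
        using f by auto
      ultimately show ?thesis using True by (auto simp: tbas_eq H'_single)
    next
      case False
      then show ?thesis by (auto simp: tbas_eq)
    qed
  qed
  also have "\<dots> = tmul (H' p a X) (H' p b Y)"
    by (simp add: tmul_def H'_def bilin_lin)
  finally show ?thesis .
qed

lemma RA_H': "RA p a X \<Longrightarrow> RA p a (H' p a X)"
  by (auto simp: RA_def keys_H')

definition cw :: "nat \<Rightarrow> nat \<Rightarrow> nat" where "cw p n = (if n = 2 then 0 else p ^ n)"

definition beta :: "nat \<Rightarrow> nat \<Rightarrow> ((mono \<times> mono) \<Rightarrow>\<^sub>0 'k::field)" where
  "beta p n = (if n = 2 then SG ((0, {}), tau 2) 1 + SG (tau 2, (0, {})) 1 else alpha_tau p n)"

lemma alpha_tau_expand: "alpha_tau p n = SG ((0, {}), tau n) 1 + SG (tau 0, zpow n 1) 1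
   + SG (tau 1, zpow (n - 1) p) 1 + SG (tau 2, zpow (n - 2) (p ^ 2)) 1"
proof -
  have "{..2::nat} = {0, 1, 2}" by auto
  then show ?thesis by (simp add: alpha_tau_def add.assoc)
qed

lemma zpow_0[simp]: "zpow 0 e = (0, {})" by (simp add: zpow_def)

lemma wt2_zpow: "p > 0 \<Longrightarrow> wt2 p (zpow k e) = (if k = 0 then 0 else e * p ^ k)"
  by (simp add: zpow_def wt2_alt)

lemma wt2_tau: "wt2 p (tau n) = (if n = 2 then 0 else p ^ n)"
  by (simp add: tau_def wt2_alt)

lemma keys_alpha_tau: "u \<in> KS (alpha_tau p n :: (mono \<times> mono) \<Rightarrow>\<^sub>0 'a::comm_ring_1) \<Longrightarrow>
   u \<in> {((0, {}), tau n), (tau 0, zpow n 1), (tau 1, zpow (n - 1) p), (tau 2, zpow (n - 2) (p ^ 2))}"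
proof (rule ccontr)
  assume u: "u \<in> KS (alpha_tau p n :: (mono \<times> mono) \<Rightarrow>\<^sub>0 'a::comm_ring_1)"
  assume "u \<notin> {((0, {}), tau n), (tau 0, zpow n 1), (tau 1, zpow (n - 1) p), (tau 2, zpow (n - 2) (p ^ 2))}"
  then have "LK (alpha_tau p n :: (mono \<times> mono) \<Rightarrow>\<^sub>0 'a) u = 0"
    unfolding alpha_tau_expand by (auto simp: lookup_add lookup_single when_def)
  with u show False by (simp add: in_keys_iff)
qed

lemma alpha_tau_props:
  assumes "p > 0" "n \<ge> 2" "u \<in> KS (alpha_tau p n)"
  shows "tfin u" "odd (tpar u)" "mAE1 (snd u)" "snd (snd u) \<subseteq> {n}" "cw p n \<le> wt2 p (snd u)"
    "n \<noteq> 2 \<Longrightarrow> wt2 p (snd u) = p ^ n"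
proof -
  have u: "u \<in> {((0, {}), tau n), (tau 0, zpow n 1), (tau 1, zpow (n - 1) p), (tau 2, zpow (n - 2) (p ^ 2))}"
    using keys_alpha_tau assms(3) by blast
  have pn: "p ^ 2 * p ^ (n - 2) = p ^ n" "p * p ^ (n - 1) = p ^ n"
  proof -
    obtain k where "n = Suc (Suc k)" using assms(2) by (metis add_2_eq_Suc le_Suc_ex)
    then show "p ^ 2 * p ^ (n - 2) = p ^ n" "p * p ^ (n - 1) = p ^ n" by (simp_all add: power2_eq_square)
  qed
  show "tfin u" "odd (tpar u)" "snd (snd u) \<subseteq> {n}" using u assms by (auto simp: tfin_def tau_def zpow_def tpar_def split: if_splits)
  show "mAE1 (snd u)" using u assms by (auto simp: mAE1_def tau_def zpow_def split: if_splits)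
  show "cw p n \<le> wt2 p (snd u)" "n \<noteq> 2 \<Longrightarrow> wt2 p (snd u) = p ^ n"
    using u assms pn by (auto simp: cw_def wt2_zpow wt2_tau)
qed

lemma RA_alpha_tau: "p > 0 \<Longrightarrow> n \<ge> 2 \<Longrightarrow> RA p (cw p n) (alpha_tau p n)"
  using alpha_tau_props by (auto simp: RA_def)

lemma H'_alpha_tau: 
  assumes "p > 0" "n \<ge> 2"
  shows "H' p (cw p n) (alpha_tau p n) = (beta p n :: (mono \<times> mono) \<Rightarrow>\<^sub>0 'a::field)"
proof (cases "n = 2")
  case True
  have "p * p \<noteq> 0" "p ^ 2 \<noteq> 0" using assms by auto
  then show ?thesis using True assms
    by (simp add: alpha_tau_expand H'_add H'_single beta_def cw_def wt2_zpow wt2_tau)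
next
  case False
  have "H' p (p ^ n) (alpha_tau p n) = (alpha_tau p n :: (mono \<times> mono) \<Rightarrow>\<^sub>0 'a)"
    by (rule H'_id) (rule alpha_tau_props(6)[OF assms _ False])
  then show ?thesis using False by (simp add: beta_def cw_def)
qed

lemma beta_props:
  assumes "p > 0" "n \<ge> 2" "u \<in> KS (beta p n :: (mono \<times> mono) \<Rightarrow>\<^sub>0 'a::field)"
  shows "tfin u" "odd (tpar u)" "mAE1 (snd u)" "snd (snd u) \<subseteq> {n}"
proof -
  have "u \<in> KS (H' p (cw p n) (alpha_tau p n :: (mono \<times> mono) \<Rightarrow>\<^sub>0 'a))"
    by (subst H'_alpha_tau[OF assms(1,2)]) (rule assms(3))
  then have u: "u \<in> KS (alpha_tau p n :: (mono \<times> mono) \<Rightarrow>\<^sub>0 'a)" by (simp add: keys_H')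
  show "tfin u" by (rule alpha_tau_props(1)[OF assms(1,2) u])
  show "odd (tpar u)" by (rule alpha_tau_props(2)[OF assms(1,2) u])
  show "mAE1 (snd u)" by (rule alpha_tau_props(3)[OF assms(1,2) u])
  show "snd (snd u) \<subseteq> {n}" by (rule alpha_tau_props(4)[OF assms(1,2) u])
qed


definition stp :: "nat \<Rightarrow> ((mono \<times> mono) \<Rightarrow>\<^sub>0 'k::field) \<Rightarrow> nat \<Rightarrow> ((mono \<times> mono) \<Rightarrow>\<^sub>0 'k)" where
  "stp p acc n = tmul acc (alpha_tau p n)"
definition stp0 :: "nat \<Rightarrow> ((mono \<times> mono) \<Rightarrow>\<^sub>0 'k::field) \<Rightarrow> nat \<Rightarrow> ((mono \<times> mono) \<Rightarrow>\<^sub>0 'k)" where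
  "stp0 p acc n = tmul acc (beta p n)"
definition X0 :: "mono \<Rightarrow> ((mono \<times> mono) \<Rightarrow>\<^sub>0 'k::field)" where
  "X0 m = SG ((0, {}), (fst m, {})) 1"

lemma alpha_mono_foldl: "alpha_mono p m = foldl (stp p) (X0 m) (sorted_list_of_set (snd m))"
  by (simp add: alpha_mono_def stp_def[abs_def] X0_def)

definition RM :: "nat set \<Rightarrow> ((mono \<times> mono) \<Rightarrow>\<^sub>0 'k::field) \<Rightarrow> bool" where
  "RM T X \<longleftrightarrow> (\<forall>u\<in>KS X. tfin u \<and> mAE1 (snd u) \<and> snd (snd u) \<subseteq> T)"

lemma snd_tadd[simp]: "snd (tadd u v) = madd (snd u) (snd v)" by (simp add: tadd_def)
lemma snd_madd[simp]: "snd (madd a b) = snd a \<union> snd b" by (simp add: madd_def)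

lemma RM_tmul: "RM T X \<Longrightarrow> RM T Y \<Longrightarrow> RM T (tmul X Y)"
  unfolding RM_def
proof
  fix c assume a: "\<forall>u\<in>KS X. tfin u \<and> mAE1 (snd u) \<and> snd (snd u) \<subseteq> T"
    "\<forall>u\<in>KS Y. tfin u \<and> mAE1 (snd u) \<and> snd (snd u) \<subseteq> T" and c: "c \<in> KS (tmul X Y)"
  show "tfin c \<and> mAE1 (snd c) \<and> snd (snd c) \<subseteq> T"
  proof (rule keys_tmul_P[where P="\<lambda>c. tfin c \<and> mAE1 (snd c) \<and> snd (snd c) \<subseteq> T", OF _ c])
    fix u v assume uv: "u \<in> KS X" "v \<in> KS Y"
    then have "tfin u" "mAE1 (snd u)" "snd (snd u) \<subseteq> T" "tfin v" "mAE1 (snd v)" "snd (snd v) \<subseteq> T"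
      using a by auto
    then show "tfin (tadd u v) \<and> mAE1 (snd (tadd u v)) \<and> snd (snd (tadd u v)) \<subseteq> T"
      by (simp add: tfin_tadd mAE1_madd)
  qed
qed

lemma RM_alpha_tau:
  assumes "p > 0" "n \<ge> 2" "n \<in> T" shows "RM T (alpha_tau p n)"
  unfolding RM_def
proof
  fix u assume u: "u \<in> KS (alpha_tau p n)"
  show "tfin u \<and> mAE1 (snd u) \<and> snd (snd u) \<subseteq> T"
    using alpha_tau_props(1,3,4)[OF assms(1,2) u] assms(3) by blast
qed
lemma RM_beta:
  assumes "p > 0" "n \<ge> 2" "n \<in> T" shows "RM T (beta p n)"
  unfolding RM_def
proof
  fix u assume u: "u \<in> KS (beta p n)"
  show "tfin u \<and> mAE1 (snd u) \<and> snd (snd u) \<subseteq> T"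
    using beta_props(1,3,4)[OF assms(1,2) u] assms(3) by blast
qed

lemma RM_foldl: "p > 0 \<Longrightarrow> RM T X \<Longrightarrow> set L \<subseteq> T \<Longrightarrow> (\<forall>n\<in>set L. n \<ge> 2) \<Longrightarrow> RM T (foldl (stp p) X L)"
  by (induction L arbitrary: X) (auto simp: stp_def intro!: RM_tmul RM_alpha_tau)

lemma RM_foldl0: "p > 0 \<Longrightarrow> RM T X \<Longrightarrow> set L \<subseteq> T \<Longrightarrow> (\<forall>n\<in>set L. n \<ge> 2) \<Longrightarrow> RM T (foldl (stp0 p) X L)"
  by (induction L arbitrary: X) (auto simp: stp0_def intro!: RM_tmul RM_beta)

lemma foldl_H':
  assumes "p > 0" "\<forall>n\<in>set L. n \<ge> 2" "RA p w X"
  shows "RA p (w + sum_list (map (cw p) L)) (foldl (stp p) X L) \<and>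
         H' p (w + sum_list (map (cw p) L)) (foldl (stp p) X L) = foldl (stp0 p) (H' p w X) L"
  using assms(2,3)
proof (induction L arbitrary: X w)
  case Nil
  then show ?case by simp
next
  case (Cons n L)
  have n: "n \<ge> 2" using Cons by auto
  have ra: "RA p (w + cw p n) (tmul X (alpha_tau p n))"
    by (rule RA_tmul[OF Cons.prems(2) RA_alpha_tau[OF assms(1) n]])
  have h: "H' p (w + cw p n) (tmul X (alpha_tau p n)) = tmul (H' p w X) (beta p n)"
    by (simp add: H'_tmul[OF Cons.prems(2) RA_alpha_tau[OF assms(1) n]] H'_alpha_tau[OF assms(1) n])
  note ih = Cons.IH[OF _ ra]
  from ih Cons.prems
  show ?case by (simp add: stp_def stp0_def add.assoc h)
qed

lemma tmul_sc1: "tmul (sc c X) Y = sc c (tmul X Y)" by (simp add: tmul_def bilin_sc1)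
lemma tmul_sc2: "tmul X (sc c Y) = sc c (tmul X Y)" by (simp add: tmul_def bilin_sc2)
lemma tmul_minus2: "tmul X (- Y) = - tmul X Y" by (simp add: tmul_def bilin_minus2)

lemma foldl_stp0_sc: "foldl (stp0 p) (sc c X) L = sc c (foldl (stp0 p) X L)"
  by (induction L arbitrary: X) (auto simp: stp0_def tmul_sc1)

lemma allfin_tmul: "allfin X \<Longrightarrow> allfin Y \<Longrightarrow> allfin (tmul X Y)"
  unfolding allfin_def
proof
  fix c assume a: "\<forall>u\<in>KS X. tfin u" "\<forall>u\<in>KS Y. tfin u" and c: "c \<in> KS (tmul X Y)"
  show "tfin c" by (rule keys_tmul_P[where P=tfin, OF _ c]) (use a in \<open>auto simp: tfin_tadd\<close>)
qed

lemma allfin_beta: "p > 0 \<Longrightarrow> n \<ge> 2 \<Longrightarrow> allfin (beta p n)"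
  using beta_props by (auto simp: allfin_def)

lemma foldl_anti:
  assumes "p > 0" "\<forall>n\<in>set L. n \<ge> 3" "allfin X"
  shows "foldl (stp0 p) (tmul X (beta p 2)) L = sc ((-1) ^ length L) (tmul (foldl (stp0 p) X L) (beta p 2))"
  using assms(2,3)
proof (induction L arbitrary: X)
  case Nil
  then show ?case by simp
next
  case (Cons n L)
  have n: "n \<ge> 2" "n \<noteq> 2" using Cons by auto
  let ?P = "beta p 2" and ?A = "beta p n"
  have fP: "allfin ?P" and fA: "allfin ?A" using allfin_beta[OF assms(1)] n by auto
  have bp: "\<forall>u\<in>KS (beta p k). tfin u \<and> odd (tpar u)" if "k \<ge> 2" for k
    using beta_props(1)[OF assms(1) that] beta_props(2)[OF assms(1) that] by blast
  have anti: "tmul ?P ?A = - tmul ?A ?P"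
    by (rule tmul_anticomm) (use bp n in auto)
  have "tmul (tmul X ?P) ?A = tmul X (tmul ?P ?A)" by (rule tmul_assoc[OF Cons.prems(2) fP fA])
  also have "\<dots> = - tmul X (tmul ?A ?P)" by (simp add: anti tmul_minus2)
  also have "\<dots> = sc (-1) (tmul (tmul X ?A) ?P)"
    by (simp add: tmul_assoc[OF Cons.prems(2) fA fP] sc_uminus_left)
  finally have e: "tmul (tmul X ?P) ?A = sc (-1) (tmul (tmul X ?A) ?P)" .
  have fXA: "allfin (tmul X ?A)" by (rule allfin_tmul[OF Cons.prems(2) fA])
  have "foldl (stp0 p) (tmul X ?P) (n # L) = foldl (stp0 p) (sc (-1) (tmul (tmul X ?A) ?P)) L"
    by (simp add: e stp0_def)
  also have "\<dots> = sc (-1) (foldl (stp0 p) (tmul (tmul X ?A) ?P) L)"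
    by (rule foldl_stp0_sc)
  also have "\<dots> = sc (-1) (sc ((-1) ^ length L) (tmul (foldl (stp0 p) (tmul X ?A) L) ?P))"
    using Cons.IH[OF _ fXA] Cons.prems by simp
  also have "\<dots> = sc ((-1) ^ length (n # L)) (tmul (foldl (stp0 p) X (n # L)) ?P)"
    by (simp add: stp0_def)
  finally show ?case .
qed


definition Kt :: "((mono \<times> mono) \<Rightarrow>\<^sub>0 'k::field) \<Rightarrow> ((mono \<times> (mono \<times> mono)) \<Rightarrow>\<^sub>0 'k)" where
  "Kt = lin (\<lambda>u. lin (\<lambda>mt. SG (fst u, mt) 1) (kappa_mono (snd u)))"

lemma Kt_single: "Kt (SG (e, r) c) = SG (e, kb r) (c * ksg r)"
  by (simp add: Kt_def kappa_mono_eq)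

lemma Kt_lin: "Kt (lin f Y) = lin (\<lambda>u. Kt (f u)) Y" by (simp add: Kt_def lin_comp)
lemma Kt_zero[simp]: "Kt 0 = 0" by (simp add: Kt_def)
lemma Kt_add: "Kt (X + Y) = Kt X + Kt Y" by (simp add: Kt_def lin_add)
lemma Kt_sc: "Kt (sc c X) = sc c (Kt X)" by (simp add: Kt_def lin_sc)

lemma sum_cw: "finite T \<Longrightarrow> (\<Sum>n\<in>T. cw p n) = (\<Sum>n\<in>T - {2}. p ^ n)"
proof -
  assume T: "finite T"
  have "(\<Sum>n\<in>T. cw p n) = (\<Sum>n\<in>T - {2}. cw p n)"
    using T by (intro sum.mono_neutral_right) (auto simp: cw_def)
  also have "\<dots> = (\<Sum>n\<in>T - {2}. p ^ n)" by (intro sum.cong) (auto simp: cw_def)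
  finally show ?thesis .
qed

lemma RA_X0: "RA p (wz p (fst m)) (X0 m)"
  by (simp add: RA_def X0_def tfin_def wt2_alt)

lemma H'_X0: "H' p (wz p (fst m)) (X0 m) = X0 m"
  by (rule H'_id) (simp add: X0_def wt2_alt)

lemma RM_X0: "mAE1 m \<Longrightarrow> RM T (X0 m)"
  by (simp add: RM_def X0_def tfin_def mAE1_def)

lemma foldl_stp0_eq: "\<forall>n\<in>set L. n \<noteq> 2 \<Longrightarrow> foldl (stp0 p) X L = foldl (stp p) X L"
  by (induction L arbitrary: X) (auto simp: stp0_def stp_def beta_def)

lemma H'_alpha_mono:
  assumes "p > 0" "mAE1 m"
  shows "RA p (wt2 p m) (alpha_mono p m :: _ \<Rightarrow>\<^sub>0 'k::field)"
    "H' p (wt2 p m) (alpha_mono p m) = (foldl (stp0 p) (X0 m) (sorted_list_of_set (snd m)) :: _ \<Rightarrow>\<^sub>0 'k)"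
proof -
  let ?L = "sorted_list_of_set (snd m)"
  have fin: "finite (snd m)" and ge: "\<forall>n\<in>set ?L. n \<ge> 2" using assms(2) by (auto simp: mAE1_def)
  have "sum_list (map (cw p) ?L) = (\<Sum>n\<in>snd m. cw p n)"
    using fin by (simp add: sum_list_distinct_conv_sum_set)
  then have w: "wz p (fst m) + sum_list (map (cw p) ?L) = wt2 p m"
    using fin by (simp add: sum_cw wt2_alt)
  have f: "RA p (wz p (fst m) + sum_list (map (cw p) ?L)) (foldl (stp p) (X0 m) ?L :: _ \<Rightarrow>\<^sub>0 'k) \<and>
         H' p (wz p (fst m) + sum_list (map (cw p) ?L)) (foldl (stp p) (X0 m) ?L :: _ \<Rightarrow>\<^sub>0 'k) = foldl (stp0 p) (H' p (wz p (fst m)) (X0 m)) ?L"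
    by (rule foldl_H'[OF assms(1) ge RA_X0])
  show "RA p (wt2 p m) (alpha_mono p m :: _ \<Rightarrow>\<^sub>0 'k)" using f w by (simp add: alpha_mono_foldl)
  show "H' p (wt2 p m) (alpha_mono p m) = (foldl (stp0 p) (X0 m) ?L :: _ \<Rightarrow>\<^sub>0 'k)"
    using f w by (simp add: alpha_mono_foldl H'_X0)
qed

lemma RM_alpha_mono: "p > 0 \<Longrightarrow> mAE1 m \<Longrightarrow> RM (snd m) (alpha_mono p m)"
  unfolding alpha_mono_foldl
  by (rule RM_foldl) (auto simp: RM_X0 mAE1_def)

lemma alpha_single[simp]: "alpha p (SG m 1) = alpha_mono p m"
  by (simp add: alpha_def)

lemma tau2: "tau 2 = (0, {2})" by (simp add: tau_def)

lemma mmul_unit: "mmul e (0, {}) = SG e 1"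
  by (simp add: mmul_eq madd_def)

lemma alphaE_1: "alphaE (0, {}) = SG ((0, {}), (0, {})) 1"
  by (simp add: alphaE_def tau2)

lemma alphaE_tau2: "alphaE (tau 2) = beta p 2"
  by (simp add: alphaE_def beta_def)

lemma core_no2:
  assumes "p > 0" "mAE1 m" "2 \<notin> snd m"
  shows "Kt (H' p (wt2 p m) (alpha_mono p m)) = alphaT p (kappa_mono m :: _ \<Rightarrow>\<^sub>0 'k::field)"
proof -
  let ?L = "sorted_list_of_set (snd m)"
  have fin: "finite (snd m)" using assms(2) by (auto simp: mAE1_def)
  have "\<forall>n\<in>set ?L. n \<noteq> 2" using assms(3) fin by auto
  then have h: "H' p (wt2 p m) (alpha_mono p m) = (alpha_mono p m :: _ \<Rightarrow>\<^sub>0 'k)"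
    using H'_alpha_mono(2)[OF assms(1,2)] by (simp add: foldl_stp0_eq alpha_mono_foldl)
  have rm: "RM (snd m) (alpha_mono p m :: _ \<Rightarrow>\<^sub>0 'k)" by (rule RM_alpha_mono[OF assms(1,2)])
  have "Kt (alpha_mono p m :: _ \<Rightarrow>\<^sub>0 'k) = lin (\<lambda>u. SG (fst u, (snd u, (0, {}))) 1) (alpha_mono p m)"
    unfolding Kt_def
  proof (rule lin_cong)
    fix u assume "u \<in> KS (alpha_mono p m :: _ \<Rightarrow>\<^sub>0 'k)"
    then have "2 \<notin> snd (snd u)" using rm assms(3) by (auto simp: RM_def)
    then show "lin (\<lambda>mt. SG (fst u, mt) 1) (kappa_mono (snd u)) = (SG (fst u, (snd u, (0, {}))) 1 :: _ \<Rightarrow>\<^sub>0 'k)"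
      by (simp add: kappa_mono_def)
  qed
  also have "\<dots> = alphaT p (kappa_mono m)"
    using assms(3)
    by (simp add: kappa_mono_def alphaT_def alphaT_bas_def alphaE_1 bilin_single2 mmul_unit par_def)
  finally show ?thesis using h by simp
qed

lemma sorted_list_2:
  assumes "finite T" "T \<subseteq> {2..}" "2 \<in> T"
  shows "sorted_list_of_set T = 2 # sorted_list_of_set (T - {2})"
proof -
  have "Min T = 2" using assms by (intro Min_eqI) auto
  then show ?thesis using sorted_list_of_set_nonempty[of T] assms by auto
qed

lemma Kt_tbas_1:
  assumes "tfin (e, r)" "snd r \<subseteq> {3..}"
  shows "Kt (tbas (e, r) ((0, {}), tau 2)) = (SG (e, (r, tau 2)) 1 :: _ \<Rightarrow>\<^sub>0 'k::field)"
proof -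
  have n2: "2 \<notin> snd r" using assms(2) by auto
  have fin: "finite (snd r)" using assms(1) by (simp add: tfin_def)
  have i: "inv_count (snd r) {2} = card (snd r)" using assms(2) fin by (simp add: inv_count_2_right)
  have "tbas (e, r) ((0, {}), tau 2) = (SG (e, (fst r, insert 2 (snd r))) ((-1) ^ card (snd r)) :: _ \<Rightarrow>\<^sub>0 'k)"
    using n2 i by (simp add: tbas_eq tdisj_def tadd_def madd_def tsg_def par_def tau2)
  moreover have "kb (fst r, insert 2 (snd r)) = (r, tau 2)" using n2 by (simp add: kb_def)
  moreover have "ksg (fst r, insert 2 (snd r)) = ((-1) ^ card (snd r) :: 'k)" using n2 i by (simp add: ksg_def)
  ultimately show ?thesis by (simp add: Kt_single flip: power_add)
qed

lemma Kt_tbas_2: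
  assumes "tfin (e, r)" "snd r \<subseteq> {3..}"
  shows "Kt (tbas (e, r) (tau 2, (0, {}))) =
    (sc ((-1) ^ card (snd r)) (lin (\<lambda>e'. SG (e', (r, (0, {}))) 1) (mmul e (tau 2))) :: _ \<Rightarrow>\<^sub>0 'k::field)"
proof (cases "2 \<in> snd e")
  case True
  then show ?thesis by (simp add: tbas_eq tdisj_def tau2 mmul_eq)
next
  case False
  have n2: "2 \<notin> snd r" using assms(2) by auto
  have "tbas (e, r) (tau 2, (0, {})) = (SG (madd e (tau 2), r) ((-1) ^ (card (snd r) + inv_count (snd e) {2})) :: _ \<Rightarrow>\<^sub>0 'k)"
    using False by (simp add: tbas_eq tdisj_def tadd_def madd_def tsg_def par_def tau2)
  moreover have "kb r = (r, (0, {}))" "ksg r = (1::'k)" using n2 by (simp_all add: kb_def ksg_def)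
  ultimately show ?thesis using False by (simp add: Kt_single mmul_eq tau2 power_add)
qed

lemma core_2:
  assumes "p > 0" "mAE1 m" "2 \<in> snd m"
  shows "Kt (H' p (wt2 p m) (alpha_mono p m)) = alphaT p (kappa_mono m :: _ \<Rightarrow>\<^sub>0 'k::field)"
proof -
  let ?T = "snd m - {2}"
  let ?m' = "(fst m, ?T)"
  let ?L = "sorted_list_of_set ?T"
  let ?P = "beta p 2 :: _ \<Rightarrow>\<^sub>0 'k"
  have fin: "finite (snd m)" "snd m \<subseteq> {2..}" using assms(2) by (auto simp: mAE1_def)
  have T3: "?T \<subseteq> {3..}" using fin(2) sub3[of ?T] by auto
  have m': "mAE1 ?m'" using assms(2) by (auto simp: mAE1_def)
  have L3: "\<forall>n\<in>set ?L. n \<ge> 3" using T3 fin by auto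
  have sl: "sorted_list_of_set (snd m) = 2 # ?L" using sorted_list_2[OF fin assms(3)] .
  have X0: "X0 ?m' = (X0 m :: _ \<Rightarrow>\<^sub>0 'k)" by (simp add: X0_def)
  have afX: "allfin (X0 m :: _ \<Rightarrow>\<^sub>0 'k)" by (simp add: allfin_def X0_def tfin_def)
  have "H' p (wt2 p m) (alpha_mono p m) = (foldl (stp0 p) (tmul (X0 m) ?P) ?L :: _ \<Rightarrow>\<^sub>0 'k)"
    using H'_alpha_mono(2)[OF assms(1,2), where 'k='k] sl by (simp add: stp0_def)
  also have "\<dots> = sc ((-1) ^ length ?L) (tmul (foldl (stp0 p) (X0 m) ?L) ?P)"
    by (rule foldl_anti[OF assms(1) L3 afX])
  also have "foldl (stp0 p) (X0 m) ?L = (alpha_mono p ?m' :: _ \<Rightarrow>\<^sub>0 'k)"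
  proof -
    have "\<forall>n\<in>set ?L. n \<noteq> 2" using L3 by auto
    then show ?thesis by (simp add: foldl_stp0_eq alpha_mono_foldl X0)
  qed
  finally have h: "H' p (wt2 p m) (alpha_mono p m) = sc ((-1) ^ card ?T) (tmul (alpha_mono p ?m') ?P :: _ \<Rightarrow>\<^sub>0 'k)"
    using fin by simp
  let ?Y = "alpha_mono p ?m' :: _ \<Rightarrow>\<^sub>0 'k"
  have rm: "RM ?T ?Y" using RM_alpha_mono[OF assms(1) m'] by simp
  have "Kt (tmul ?Y ?P) = lin (\<lambda>u. Kt (lin (tbas u) ?P)) ?Y"
    by (simp add: tmul_alt Kt_lin)
  also have "\<dots> = lin (\<lambda>u. lin (\<lambda>et. sc ((- 1) ^ (par (snd u) * par (fst et)))
          (lin (\<lambda>e. SG (e, snd u, snd et) 1) (mmul (fst u) (fst et)))) ?P) ?Y"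
  proof (rule lin_cong)
    fix u assume u: "u \<in> KS ?Y"
    obtain e r where er: "u = (e, r)" by (metis prod.exhaust)
    have "tfin u \<and> mAE1 (snd u) \<and> snd (snd u) \<subseteq> ?T" using rm u by (simp add: RM_def)
    then have uf: "tfin (e, r)" "snd r \<subseteq> {3..}" using er T3 by auto
    have n2: "2 \<notin> snd r" using uf by auto
    show "Kt (lin (tbas u) ?P) = lin (\<lambda>et. sc ((- 1) ^ (par (snd u) * par (fst et)))
          (lin (\<lambda>e. SG (e, snd u, snd et) 1) (mmul (fst u) (fst et)))) ?P"
      unfolding er using Kt_tbas_1[OF uf, where 'k='k] Kt_tbas_2[OF uf, where 'k='k]
      by (simp add: beta_def lin_add Kt_add mmul_unit par_def tau2)
  qed
  also have "\<dots> = alphaT_bas p (?m', tau 2)"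
    by (simp add: alphaT_bas_def alphaE_tau2[of p] bilin_alt)
  finally have k: "Kt (tmul ?Y ?P) = alphaT_bas p (?m', tau 2)" .
  have "kappa_mono m = SG (?m', tau 2) ((-1) ^ card ?T :: 'k)"
    using assms(3) T3 fin by (simp add: kappa_mono_def inv_count_2_right)
  then show ?thesis using h k by (simp add: Kt_sc alphaT_def)
qed


lemma comp_single[simp]: "comp S (SG (e, y) c) = (if e = (0, S) then SG y c else 0)"
  by (simp add: comp_def)

lemma comp_lin: "comp S (lin f W) = lin (\<lambda>u. comp S (f u)) W" by (simp add: comp_def lin_comp)
lemma comp_add: "comp S (X + Y) = comp S X + comp S Y" by (simp add: comp_def lin_add)
lemma comp_sc: "comp S (sc c X) = sc c (comp S X)" by (simp add: comp_def lin_sc)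
lemma comp_sum: "comp S (sum g A) = (\<Sum>a\<in>A. comp S (g a))" by (simp add: comp_def lin_sum)
lemma comp_zero[simp]: "comp S 0 = 0" by (simp add: comp_def)

lemma keys_comp: "y \<in> KS (comp S (W :: (mono \<times> 'b) \<Rightarrow>\<^sub>0 'k::comm_ring_1)) \<Longrightarrow> \<exists>e. (e, y) \<in> KS W"
proof -
  assume "y \<in> KS (comp S W)"
  then obtain u where u: "u \<in> KS W" "y \<in> KS (if fst u = (0, S) then SG (snd u) 1 else (0 :: _ \<Rightarrow>\<^sub>0 'k))"
    using keys_lin[of "\<lambda>ey. if fst ey = (0, S) then SG (snd ey) 1 else 0" W] unfolding comp_def by blast
  then have "y = snd u" by (simp split: if_splits)
  then have "(fst u, y) \<in> KS W" using u(1) by simp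
  then show ?thesis by blast
qed

lemma H_comp: "H p j (comp S W) = comp S (H' p (p * j) W)"
  unfolding comp_def H_def H'_def lin_comp
  by (rule lin_cong) (auto simp: H_def)

lemma kappa_comp: "kappa (comp S W) = comp S (Kt (W :: _ \<Rightarrow>\<^sub>0 'k::field))"
  unfolding comp_def kappa_def Kt_def lin_comp
  by (rule lin_cong) (auto simp: kappa_mono_eq comp_def[symmetric])

lemma alpha_add: "alpha p (x + y) = alpha p x + alpha p y" by (simp add: alpha_def lin_add)
lemma alpha_diff: "alpha p (x - y) = alpha p x - alpha p y" by (simp add: alpha_def lin_diff)
lemma comp_diff: "comp S (X - Y) = comp S X - comp S Y" by (simp add: comp_def lin_diff)

lemma FilC_alpha:
  assumes "p > 0" "FilC p j (x :: _ \<Rightarrow>\<^sub>0 'k::field)"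
  shows "FilC p j (comp S (alpha p x))"
  unfolding FilC_def
proof
  fix y assume "y \<in> KS (comp S (alpha p x))"
  then obtain e where "(e, y) \<in> KS (alpha p x)" using keys_comp[of y S "alpha p x"] by blast
  then obtain m where m: "m \<in> KS x" and u: "(e, y) \<in> KS (alpha_mono p m :: _ \<Rightarrow>\<^sub>0 'k)"
    using keys_lin[of "alpha_mono p" x] unfolding alpha_def by blast
  show "mAE1 y \<and> p * j \<le> wt2 p y"
  proof -
    have mm: "mAE1 m" "p * j \<le> wt2 p m" using assms m by (auto simp: FilC_def)
    have "RA p (wt2 p m) (alpha_mono p m :: _ \<Rightarrow>\<^sub>0 'k)" by (rule H'_alpha_mono(1)[OF assms(1) mm(1)])
    then have "wt2 p m \<le> wt2 p y" using u by (auto simp: RA_def)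
    moreover have "RM (snd m) (alpha_mono p m :: _ \<Rightarrow>\<^sub>0 'k)" by (rule RM_alpha_mono[OF assms(1) mm(1)])
    then have "mAE1 y" using u by (auto simp: RM_def)
    ultimately show "mAE1 y \<and> p * j \<le> wt2 p y" using mm by auto
  qed
qed

lemma coact_H:
  assumes "p > 0" "FilC p j (x :: _ \<Rightarrow>\<^sub>0 'k::field)"
  shows "H p j (comp S (alpha p x)) = H p j (comp S (alpha p (H p j x)))"
proof -
  have z: "FilC p (Suc j) (comp S (alpha p (x - H p j x)))"
    by (rule FilC_alpha[OF assms(1) FilC_diff_H[OF assms]])
  have zj: "FilC p j (comp S (alpha p (x - H p j x)))"
    by (rule FilC_mono[OF z]) simp
  have "H p j (comp S (alpha p (x - H p j x))) = 0"
    using FilC_Suc_iff[OF assms(1) zj] z by simp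
  then show ?thesis by (simp add: alpha_diff comp_diff H_diff)
qed

lemma alphaT_lin: "alphaT p (lin f y) = lin (\<lambda>m. alphaT p (f m)) y" by (simp add: alphaT_def lin_comp)
lemma H'_lin: "H' p w (lin f y) = lin (\<lambda>m. H' p w (f m)) y" by (simp add: H'_def lin_comp)

lemma coact_core:
  assumes "p > 0" "\<And>m. m \<in> KS y \<Longrightarrow> mAE1 m \<and> wt2 p m = p * j"
  shows "kappa (H p j (comp S (alpha p y))) = comp S (alphaT p (kappa (y :: _ \<Rightarrow>\<^sub>0 'k::field)))"
proof -
  have "Kt (H' p (p * j) (alpha p y)) = lin (\<lambda>m. Kt (H' p (p * j) (alpha_mono p m))) y"
    by (simp add: alpha_def H'_lin Kt_lin)
  also have "\<dots> = lin (\<lambda>m. alphaT p (kappa_mono m)) y"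
  proof (rule lin_cong)
    fix m assume "m \<in> KS y"
    then have m: "mAE1 m" "wt2 p m = p * j" using assms(2) by auto
    show "Kt (H' p (p * j) (alpha_mono p m)) = alphaT p (kappa_mono m :: _ \<Rightarrow>\<^sub>0 'k)"
      using core_no2[OF assms(1) m(1)] core_2[OF assms(1) m(1)] m(2) by (cases "2 \<in> snd m") auto
  qed
  also have "\<dots> = alphaT p (kappa y)" by (simp add: kappa_def alphaT_lin)
  finally show ?thesis by (simp add: H_comp kappa_comp)
qed

lemma alphaT_add: "alphaT p (x + y) = alphaT p x + alphaT p y" by (simp add: alphaT_def lin_add)
lemma alphaT_sum: "alphaT p (sum g A) = (\<Sum>a\<in>A. alphaT p (g a))" by (simp add: alphaT_def lin_sum)


definition GG :: "nat \<Rightarrow> (nat \<Rightarrow> (mono \<Rightarrow>\<^sub>0 'k::field) set) \<Rightarrow> nat \<Rightarrow> (mono \<Rightarrow>\<^sub>0 'k)" where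
  "GG q f j = H q j (rep (f j))"

context
  fixes p :: nat
  assumes p0: "p > 0"
begin

lemma Fil_eq: "Fil p j = {x :: _ \<Rightarrow>\<^sub>0 'k::field. FilC p j x}"
  using Fil_iff[OF p0] by auto

lemma rel_iff: "((x :: _ \<Rightarrow>\<^sub>0 'k::field), y) \<in> rel p j \<longleftrightarrow> FilC p j x \<and> FilC p j y \<and> H p j x = H p j y"
proof -
  have "FilC p (Suc j) (x - y) \<longleftrightarrow> H p j x = H p j y" if "FilC p j x" "FilC p j y"
    using FilC_Suc_iff[OF p0 FilC_diff[OF that]] by (simp add: H_diff)
  then show ?thesis by (auto simp: rel_def Fil_eq)
qed

lemma cls_set: "FilC p j x \<Longrightarrow> cls p j x = {y :: _ \<Rightarrow>\<^sub>0 'k::field. FilC p j y \<and> H p j y = H p j x}"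
  by (auto simp: cls_def rel_iff)

lemma cls_same: "FilC p j x \<Longrightarrow> FilC p j (y :: _ \<Rightarrow>\<^sub>0 'k::field) \<Longrightarrow> cls p j x = cls p j y \<longleftrightarrow> H p j x = H p j y"
  by (auto simp: cls_set set_eq_iff)

lemma rep_cls:
  assumes "FilC p j (x :: _ \<Rightarrow>\<^sub>0 'k::field)"
  shows "FilC p j (rep (cls p j x)) \<and> H p j (rep (cls p j x)) = H p j x"
proof -
  have "x \<in> cls p j x" using assms by (simp add: cls_set)
  then have "rep (cls p j x) \<in> cls p j x" unfolding rep_def by (rule someI)
  then show ?thesis using assms by (simp add: cls_set)
qed

lemma Gr_iff: "X \<in> Gr p j \<longleftrightarrow> (\<exists>x :: _ \<Rightarrow>\<^sub>0 'k::field. FilC p j x \<and> X = cls p j x)"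
  by (auto simp: Gr_def quotient_def Fil_eq cls_def)


lemma E0_rep:
  assumes "f \<in> E0 p"
  shows "FilC p j (rep (f j))" "f j = cls p j (rep (f j :: (_ \<Rightarrow>\<^sub>0 'k::field) set))"
proof -
  obtain x where x: "FilC p j x" "f j = cls p j (x :: _ \<Rightarrow>\<^sub>0 'k)" using assms by (auto simp: E0_def Gr_iff)
  then show "FilC p j (rep (f j))" using rep_cls by auto
  have r: "FilC p j (rep (cls p j x))" "H p j (rep (cls p j x)) = H p j x" using rep_cls[OF x(1)] by auto
  have "cls p j x = cls p j (rep (cls p j x))" using cls_same[OF x(1) r(1)] r(2) by simp
  then show "f j = cls p j (rep (f j))" using x(2) by simp
qed

lemma E0_supp:
  assumes "f \<in> E0 p"
  shows "f j \<noteq> cls p j 0 \<longleftrightarrow> GG p f j \<noteq> (0 :: _ \<Rightarrow>\<^sub>0 'k::field)"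
proof -
  have "f j = cls p j (rep (f j))" by (rule E0_rep(2)[OF assms])
  moreover have "cls p j (rep (f j)) = cls p j 0 \<longleftrightarrow> H p j (rep (f j)) = H p j 0"
    by (rule cls_same[OF E0_rep(1)[OF assms]]) simp
  ultimately show ?thesis by (simp add: GG_def)
qed

lemma E0_finite: "f \<in> E0 p \<Longrightarrow> finite {j. GG p f j \<noteq> (0 :: _ \<Rightarrow>\<^sub>0 'k::field)}"
proof -
  assume f: "f \<in> E0 p"
  then have "{j. GG p f j \<noteq> 0} = {j. f j \<noteq> cls p j (0 :: _ \<Rightarrow>\<^sub>0 'k)}" using E0_supp[OF f] by auto
  then show ?thesis using f by (simp add: E0_def)
qed

lemma GG_FilC: "f \<in> E0 p \<Longrightarrow> FilC p j (GG p f j :: _ \<Rightarrow>\<^sub>0 'k::field)"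
  by (simp add: GG_def FilC_H E0_rep(1))

lemma GG_keys: "f \<in> E0 p \<Longrightarrow> m \<in> KS (GG p f j :: _ \<Rightarrow>\<^sub>0 'k::field) \<Longrightarrow> mAE1 m \<and> wt2 p m = p * j"
  using E0_rep(1)[of f j] by (auto simp: GG_def keys_H FilC_def)

lemma E0kappa_eq:
  assumes "f \<in> E0 p" "finite J" "{j. GG p f j \<noteq> 0} \<subseteq> J"
  shows "E0kappa p f = kappa (\<Sum>j\<in>J. GG p f j :: _ \<Rightarrow>\<^sub>0 'k::field)"
proof -
  have "E0kappa p f = (\<Sum>j\<in>{j. GG p f j \<noteq> 0}. kappa (GG p f j))"
    unfolding E0kappa_def using E0_supp[OF assms(1)]
    by (intro sum.cong) (auto simp: prj_kappa GG_def)
  also have "\<dots> = (\<Sum>j\<in>J. kappa (GG p f j))"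
    using assms by (intro sum.mono_neutral_left) auto
  finally show ?thesis by (simp add: kappa_sum)
qed

lemma mk_E0:
  assumes "\<And>j. FilC p j (F j :: _ \<Rightarrow>\<^sub>0 'k::field)" "finite {j. H p j (F j) \<noteq> 0}"
  shows "(\<lambda>j. cls p j (F j)) \<in> E0 p" "GG p (\<lambda>j. cls p j (F j)) j = H p j (F j)"
proof -
  show "GG p (\<lambda>j. cls p j (F j)) j = H p j (F j)" using rep_cls[OF assms(1)] by (simp add: GG_def)
  have "{j. cls p j (F j) \<noteq> cls p j 0} = {j. H p j (F j) \<noteq> 0}"
    using cls_same[OF assms(1)] by auto
  then show "(\<lambda>j. cls p j (F j)) \<in> E0 p" using assms by (auto simp: E0_def Gr_iff)
qed

lemma FilC_AE1: "FilC p j x \<Longrightarrow> x \<in> AE1"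
  by (auto simp: FilC_def AE1_def)

end


context
  fixes p :: nat
  assumes p0: "p > 0"
begin

abbreviation "Sp f \<equiv> {j. GG p f j \<noteq> 0}"

lemma add_E0:
  assumes "f \<in> E0 p" "g \<in> E0 p"
  shows "E0add p f g \<in> E0 p" "GG p (E0add p f g) j = GG p f j + (GG p g j :: _ \<Rightarrow>\<^sub>0 'k::field)"
proof -
  let ?F = "\<lambda>j. rep (f j) + rep (g j) :: _ \<Rightarrow>\<^sub>0 'k"
  have F: "FilC p j (?F j)" for j using E0_rep(1)[OF p0 assms(1)] E0_rep(1)[OF p0 assms(2)] by (simp add: FilC_add)
  have HF: "H p j (?F j) = GG p f j + GG p g j" for j by (simp add: H_add GG_def)
  have "{j. H p j (?F j) \<noteq> 0} \<subseteq> Sp f \<union> Sp g" using HF by auto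
  then have fin: "finite {j. H p j (?F j) \<noteq> 0}"
    using E0_finite[OF p0 assms(1)] E0_finite[OF p0 assms(2)] by (meson finite_UnI finite_subset)
  show "E0add p f g \<in> E0 p" unfolding E0add_def by (rule mk_E0(1)[OF p0 F fin])
  show "GG p (E0add p f g) j = GG p f j + GG p g j" unfolding E0add_def by (simp add: mk_E0(2)[OF p0 F fin] HF)
qed

lemma smul_E0:
  assumes "f \<in> E0 p"
  shows "E0smul p c f \<in> E0 p" "GG p (E0smul p c f) j = sc c (GG p f j :: _ \<Rightarrow>\<^sub>0 'k::field)"
proof -
  let ?F = "\<lambda>j. sc c (rep (f j)) :: _ \<Rightarrow>\<^sub>0 'k"
  have F: "FilC p j (?F j)" for j using E0_rep(1)[OF p0 assms(1)] by (simp add: FilC_sc)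
  have HF: "H p j (?F j) = sc c (GG p f j)" for j by (simp add: H_sc GG_def)
  have "{j. H p j (?F j) \<noteq> 0} \<subseteq> Sp f" using HF by auto
  then have fin: "finite {j. H p j (?F j) \<noteq> 0}"
    using E0_finite[OF p0 assms(1)] by (meson finite_subset)
  show "E0smul p c f \<in> E0 p" unfolding E0smul_def by (rule mk_E0(1)[OF p0 F fin])
  show "GG p (E0smul p c f) j = sc c (GG p f j)" unfolding E0smul_def by (simp add: mk_E0(2)[OF p0 F fin] HF)
qed

lemma vmul_zero1[simp]: "vmul 0 y = 0" by (simp add: vmul_def)
lemma vmul_zero2[simp]: "vmul x 0 = 0" by (simp add: vmul_def)

lemma mul_E0:
  assumes "f \<in> E0 p" "g \<in> E0 p"
  shows "E0mul p f g \<in> E0 p" "GG p (E0mul p f g) n = (\<Sum>i\<le>n. vmul (GG p f i) (GG p g (n - i)) :: _ \<Rightarrow>\<^sub>0 'k::field)"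
proof -
  let ?F = "\<lambda>n. (\<Sum>i\<le>n. vmul (rep (f i)) (rep (g (n - i)))) :: _ \<Rightarrow>\<^sub>0 'k"
  have F: "FilC p n (?F n)" for n
  proof (rule FilC_sum)
    fix i assume "i \<in> {..n}"
    then have "FilC p (i + (n - i)) (vmul (rep (f i)) (rep (g (n - i))) :: _ \<Rightarrow>\<^sub>0 'k)"
      by (intro FilC_vmul E0_rep(1)[OF p0] assms)
    then show "FilC p n (vmul (rep (f i)) (rep (g (n - i))))" using \<open>i \<in> {..n}\<close> by simp
  qed
  have HF: "H p n (?F n) = (\<Sum>i\<le>n. vmul (GG p f i) (GG p g (n - i)))" for n
  proof -
    have "H p n (?F n) = (\<Sum>i\<le>n. H p (i + (n - i)) (vmul (rep (f i)) (rep (g (n - i)))))"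
      by (simp add: H_sum del: le_add_diff_inverse)
    also have "\<dots> = (\<Sum>i\<le>n. vmul (GG p f i) (GG p g (n - i)))"
    proof (rule sum.cong[OF refl])
      fix i
      show "H p (i + (n - i)) (vmul (rep (f i)) (rep (g (n - i)))) = vmul (GG p f i) (GG p g (n - i))"
        unfolding GG_def by (rule H_vmul[OF p0 E0_rep(1)[OF p0 assms(1)] E0_rep(1)[OF p0 assms(2)]])
    qed
    finally show ?thesis .
  qed
  have "{n. H p n (?F n) \<noteq> 0} \<subseteq> (\<lambda>(a, b). a + b) ` (Sp f \<times> Sp g)"
  proof
    fix n assume "n \<in> {n. H p n (?F n) \<noteq> 0}"
    then have "(\<Sum>i\<le>n. vmul (GG p f i) (GG p g (n - i))) \<noteq> 0" using HF by simp
    then obtain i where i: "i \<in> {..n}" "vmul (GG p f i) (GG p g (n - i)) \<noteq> 0"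
      by (meson sum.neutral)
    then have "GG p f i \<noteq> 0" "GG p g (n - i) \<noteq> 0" by auto
    moreover have "n = (\<lambda>(a, b). a + b) (i, n - i)" using i(1) by simp
    ultimately show "n \<in> (\<lambda>(a, b). a + b) ` (Sp f \<times> Sp g)"
      by (intro image_eqI[of _ _ "(i, n - i)"]) auto
  qed
  moreover have "finite ((\<lambda>(a, b). a + b) ` (Sp f \<times> Sp g))"
    using E0_finite[OF p0 assms(1)] E0_finite[OF p0 assms(2)] by simp
  ultimately have fin: "finite {n. H p n (?F n) \<noteq> 0}" by (rule finite_subset)
  show "E0mul p f g \<in> E0 p" unfolding E0mul_def by (rule mk_E0(1)[OF p0 F fin])
  show "GG p (E0mul p f g) n = (\<Sum>i\<le>n. vmul (GG p f i) (GG p g (n - i)))"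
    unfolding E0mul_def by (simp add: mk_E0(2)[OF p0 F fin] HF)
qed

lemma one_E0:
  shows "(E0one p :: nat \<Rightarrow> (mono \<Rightarrow>\<^sub>0 'k::field) set) \<in> E0 p" "E0kappa p (E0one p :: nat \<Rightarrow> (mono \<Rightarrow>\<^sub>0 'k) set) = TTone"
proof -
  let ?F = "\<lambda>j. if j = 0 then vone else (0 :: _ \<Rightarrow>\<^sub>0 'k)"
  have F: "FilC p j (?F j)" for j by (auto simp: vone_def FilC_def)
  have H0: "H p 0 (vone :: _ \<Rightarrow>\<^sub>0 'k) = vone"
    by (rule poly_mapping_eqI) (auto simp: lookup_H vone_def lookup_single when_def)
  have "{j. H p j (?F j) \<noteq> 0} \<subseteq> {0}" by auto
  then have fin: "finite {j. H p j (?F j) \<noteq> 0}" by (rule finite_subset) simp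
  show m: "(E0one p :: nat \<Rightarrow> (mono \<Rightarrow>\<^sub>0 'k) set) \<in> E0 p" unfolding E0one_def by (rule mk_E0(1)[OF p0 F fin])
  have G: "GG p (E0one p) j = (if j = 0 then vone else (0 :: _ \<Rightarrow>\<^sub>0 'k))" for j
    unfolding E0one_def using H0 by (simp add: mk_E0(2)[OF p0 F fin])
  have "E0kappa p (E0one p :: nat \<Rightarrow> (mono \<Rightarrow>\<^sub>0 'k) set) = kappa (\<Sum>j\<in>{0}. GG p (E0one p) j)"
    by (rule E0kappa_eq[OF p0 m]) (auto simp: G)
  also have "\<dots> = TTone"
    by (simp add: G vone_def TTone_def kappa_def kappa_mono_def)
  finally show "E0kappa p (E0one p :: nat \<Rightarrow> (mono \<Rightarrow>\<^sub>0 'k) set) = TTone" .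
qed

end


definition kinv_b :: "mono \<times> mono \<Rightarrow> (mono \<Rightarrow>\<^sub>0 'k::field)" where
  "kinv_b u = (if snd u = tau 2 then SG (fst (fst u), insert 2 (snd (fst u))) ((-1) ^ inv_count (snd (fst u)) {2})
               else SG (fst u) 1)"

lemma kinv_props:
  assumes "y \<in> TT"
  shows "kappa (lin kinv_b y) = (y :: _ \<Rightarrow>\<^sub>0 'k::field)" "lin kinv_b y \<in> AE1"
proof -
  have "kappa (lin kinv_b y) = lin (\<lambda>u. kappa (kinv_b u)) y" by (simp add: kappa_def lin_comp)
  also have "\<dots> = lin (\<lambda>u. SG u 1) y"
  proof (rule lin_cong)
    fix u assume u: "u \<in> KS y"
    obtain a T t where ut: "u = ((a, T), t)" by (metis prod.exhaust)
    have m: "mAE2 (a, T)" "t = (0, {}) \<or> t = tau 2" using assms u ut by (auto simp: TT_def)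
    have T: "finite T" "T \<subseteq> {3..}" "2 \<notin> T" using m(1) by (auto simp: mAE2_def)
    show "kappa (kinv_b u) = (SG u 1 :: _ \<Rightarrow>\<^sub>0 'k)"
    proof (cases "t = tau 2")
      case True
      have "kb (a, insert 2 T) = ((a, T), tau 2)" using T by (simp add: kb_def)
      moreover have "ksg (a, insert 2 T) = ((-1) ^ inv_count T {2} :: 'k)" using T by (simp add: ksg_def)
      ultimately show ?thesis using True ut
        by (simp add: kinv_b_def kappa_def kappa_mono_eq flip: power_add)
    next
      case False
      then have "t = (0, {})" using m by auto
      then show ?thesis using False ut T by (simp add: kinv_b_def kappa_def kappa_mono_eq kb_def ksg_def)
    qed
  qed
  finally show "kappa (lin kinv_b y) = y" by simp
  show "lin kinv_b y \<in> AE1" unfolding AE1_def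
  proof (intro CollectI ballI)
    fix m assume "m \<in> KS (lin kinv_b y :: _ \<Rightarrow>\<^sub>0 'k)"
    then obtain u where u: "u \<in> KS y" "m \<in> KS (kinv_b u :: _ \<Rightarrow>\<^sub>0 'k)"
      using keys_lin[of kinv_b y] by blast
    obtain a T t where ut: "u = ((a, T), t)" by (metis prod.exhaust)
    have "\<forall>mt\<in>KS y. mAE2 (fst mt)" using assms by (simp add: TT_def)
    then have "mAE2 (fst u)" using u(1) by blast
    then have "mAE2 (a, T)" using ut by simp
    then have aT: "0 \<notin> KS a" "finite T" "T \<subseteq> {3..}" by (simp_all add: mAE2_def)
    have "m = (a, insert 2 T) \<or> m = (a, T)" using u(2) ut by (simp add: kinv_b_def split: if_splits)
    then show "mAE1 m" using aT by (auto simp: mAE1_def)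
  qed
qed

lemma alpha_zero[simp]: "alpha q 0 = 0" by (simp add: alpha_def)
lemma vmul0l[simp]: "vmul 0 y = 0" by (simp add: vmul_def)
lemma vmul0r[simp]: "vmul x 0 = 0" by (simp add: vmul_def)

lemma cauchy:
  fixes h :: "nat \<Rightarrow> nat \<Rightarrow> 'a::comm_monoid_add"
  assumes "\<And>i k. N < i \<or> N < k \<Longrightarrow> h i k = 0"
  shows "(\<Sum>n\<le>2 * N. \<Sum>i\<le>n. h i (n - i)) = (\<Sum>i\<le>N. \<Sum>k\<le>N. h i k)"
proof -
  have "(\<Sum>n\<le>2 * N. \<Sum>i\<le>n. h i (n - i)) = (\<Sum>(i, k)\<in>{(i, k). i + k \<le> 2 * N}. h i k)"
    by (rule sum.triangle_reindex_eq[symmetric])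
  also have "\<dots> = (\<Sum>(i, k)\<in>{..N} \<times> {..N}. h i k)"
  proof (rule sum.mono_neutral_right)
    show "finite {(i, k). i + k \<le> 2 * N}"
      by (rule finite_subset[of _ "{..2*N} \<times> {..2*N}"]) auto
    show "{..N} \<times> {..N} \<subseteq> {(i, k). i + k \<le> 2 * N}" by auto
    show "\<forall>x\<in>{(i, k). i + k \<le> 2 * N} - {..N} \<times> {..N}. (case x of (i, k) \<Rightarrow> h i k) = 0"
    proof
      fix x assume x: "x \<in> {(i, k). i + k \<le> 2 * N} - {..N} \<times> {..N}"
      obtain i k where ik: "x = (i, k)" by (metis prod.exhaust)
      have "N < i \<or> N < k" using x ik by auto
      then show "(case x of (i, k) \<Rightarrow> h i k) = 0" using ik assms by simp
    qed
  qed
  also have "\<dots> = (\<Sum>i\<le>N. \<Sum>k\<le>N. h i k)" by (simp add: sum.cartesian_product)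
  finally show ?thesis .
qed

context
  fixes p :: nat
  assumes p0: "p > 0"
begin


lemma coact_E0:
  assumes "f \<in> E0 p"
  shows "E0coact p f S \<in> E0 p" "GG p (E0coact p f S) j = H p j (comp S (alpha p (GG p f j :: _ \<Rightarrow>\<^sub>0 'k::field)))"
proof -
  let ?F = "\<lambda>j. comp S (alpha p (rep (f j))) :: _ \<Rightarrow>\<^sub>0 'k"
  have F: "FilC p j (?F j)" for j by (rule FilC_alpha[OF p0 E0_rep(1)[OF p0 assms]])
  have HF: "H p j (?F j) = H p j (comp S (alpha p (GG p f j)))" for j
    unfolding GG_def by (rule coact_H[OF p0 E0_rep(1)[OF p0 assms]])
  have "{j. H p j (?F j) \<noteq> 0} \<subseteq> Sp p f" using HF by auto
  then have fin: "finite {j. H p j (?F j) \<noteq> 0}"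
    using E0_finite[OF p0 assms(1)] by (meson finite_subset)
  have e: "E0coact p f S = (\<lambda>j. cls p j (?F j))" by (simp add: E0coact_def)
  show "E0coact p f S \<in> E0 p" unfolding e by (rule mk_E0(1)[OF p0 F fin])
  show "GG p (E0coact p f S) j = H p j (comp S (alpha p (GG p f j)))" unfolding e by (simp add: mk_E0(2)[OF p0 F fin] HF)
qed

lemma AE1_sumGG: "f \<in> E0 p \<Longrightarrow> (\<Sum>j\<in>J. GG p f j :: _ \<Rightarrow>\<^sub>0 'k::field) \<in> AE1"
  by (rule FilC_AE1[OF p0, of 0]) (auto intro!: FilC_sum FilC_mono[OF GG_FilC[OF p0]])

lemma kappa_add_E0:
  assumes "f \<in> E0 p" "g \<in> E0 p"
  shows "E0kappa p (E0add p f g) = E0kappa p f + E0kappa p (g :: nat \<Rightarrow> (mono \<Rightarrow>\<^sub>0 'k::field) set)"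
proof -
  let ?J = "Sp p f \<union> Sp p g"
  have fin: "finite ?J" using E0_finite[OF p0 assms(1)] E0_finite[OF p0 assms(2)] by simp
  have "E0kappa p (E0add p f g) = kappa (\<Sum>j\<in>?J. GG p (E0add p f g) j)"
    by (rule E0kappa_eq[OF p0 add_E0(1)[OF p0 assms] fin]) (auto simp: add_E0(2)[OF p0 assms])
  also have "\<dots> = kappa (\<Sum>j\<in>?J. GG p f j) + kappa (\<Sum>j\<in>?J. GG p g j)"
    by (simp add: add_E0(2)[OF p0 assms] sum.distrib kappa_add)
  also have "\<dots> = E0kappa p f + E0kappa p g"
    using E0kappa_eq[OF p0 assms(1) fin] E0kappa_eq[OF p0 assms(2) fin] by auto
  finally show ?thesis .
qed

lemma kappa_smul_E0:
  assumes "f \<in> E0 p"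
  shows "E0kappa p (E0smul p c f) = sc c (E0kappa p (f :: nat \<Rightarrow> (mono \<Rightarrow>\<^sub>0 'k::field) set))"
proof -
  let ?J = "Sp p f"
  have fin: "finite ?J" by (rule E0_finite[OF p0 assms])
  have "E0kappa p (E0smul p c f) = kappa (\<Sum>j\<in>?J. GG p (E0smul p c f) j)"
    by (rule E0kappa_eq[OF p0 smul_E0(1)[OF p0 assms] fin]) (auto simp: smul_E0(2)[OF p0 assms])
  also have "\<dots> = sc c (kappa (\<Sum>j\<in>?J. GG p f j))"
    by (simp add: smul_E0(2)[OF p0 assms] sc_sum[symmetric] kappa_sc)
  also have "\<dots> = sc c (E0kappa p f)"
    using E0kappa_eq[OF p0 assms(1) fin] by auto
  finally show ?thesis .
qed

lemma kappa_mul_E0: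
  assumes "f \<in> E0 p" "g \<in> E0 p"
  shows "E0kappa p (E0mul p f g) = tmul (E0kappa p f) (E0kappa p (g :: nat \<Rightarrow> (mono \<Rightarrow>\<^sub>0 'k::field) set))"
proof -
  obtain N where N: "\<forall>j\<in>Sp p f \<union> Sp p g. j \<le> N"
    using E0_finite[OF p0 assms(1)] E0_finite[OF p0 assms(2)] by (meson finite_UnI finite_nat_set_iff_bounded_le)
  let ?h = "\<lambda>i k. vmul (GG p f i) (GG p g k) :: _ \<Rightarrow>\<^sub>0 'k"
  have hz: "?h i k = 0" if "N < i \<or> N < k" for i k
  proof -
    have "GG p f i = 0" if "N < i" using N that by (metis (mono_tags, lifting) UnI1 mem_Collect_eq not_le)
    moreover have "GG p g k = 0" if "N < k" using N that by (metis (mono_tags, lifting) UnI2 mem_Collect_eq not_le)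
    ultimately show ?thesis using that by auto
  qed
  have sub: "{n. GG p (E0mul p f g) n \<noteq> 0} \<subseteq> {..2 * N}"
  proof
    fix n assume "n \<in> {n. GG p (E0mul p f g) n \<noteq> 0}"
    then have "(\<Sum>i\<le>n. ?h i (n - i)) \<noteq> 0" by (simp add: mul_E0(2)[OF p0 assms])
    then obtain i where i: "i \<in> {..n}" "?h i (n - i) \<noteq> 0" by (meson sum.neutral)
    then have "i \<le> N" "n - i \<le> N" using hz by (meson not_le)+
    then show "n \<in> {..2 * N}" using i(1) by auto
  qed
  have "E0kappa p (E0mul p f g) = kappa (\<Sum>n\<le>2 * N. GG p (E0mul p f g) n)"
    by (rule E0kappa_eq[OF p0 mul_E0(1)[OF p0 assms] _ sub]) simp
  also have "(\<Sum>n\<le>2 * N. GG p (E0mul p f g) n) = (\<Sum>n\<le>2 * N. \<Sum>i\<le>n. ?h i (n - i))"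
    by (simp add: mul_E0(2)[OF p0 assms])
  also have "\<dots> = (\<Sum>i\<le>N. \<Sum>k\<le>N. ?h i k)"
    by (intro cauchy hz)
  also have "\<dots> = vmul (\<Sum>i\<le>N. GG p f i) (\<Sum>k\<le>N. GG p g k)"
    by (simp add: vmul_def bilin_sum1 bilin_sum2) (rule sum.swap)
  also have "kappa \<dots> = tmul (kappa (\<Sum>i\<le>N. GG p f i)) (kappa (\<Sum>k\<le>N. GG p g k))"
    by (rule kappa_vmul[OF AE1_sumGG[OF assms(1)] AE1_sumGG[OF assms(2)]])
  also have "\<dots> = tmul (E0kappa p f) (E0kappa p g)"
  proof -
    have "Sp p f \<subseteq> {..N}" "Sp p g \<subseteq> {..N}" using N by auto
    then show ?thesis using E0kappa_eq[OF p0 assms(1), of "{..N}"] E0kappa_eq[OF p0 assms(2), of "{..N}"] by simp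
  qed
  finally show ?thesis .
qed

end


context
  fixes p :: nat
  assumes p0: "p > 0"
begin

lemma kappa_coact_E0:
  assumes "f \<in> E0 p"
  shows "comp S (alphaT p (E0kappa p f)) = E0kappa p (E0coact p (f :: nat \<Rightarrow> (mono \<Rightarrow>\<^sub>0 'k::field) set) S)"
proof -
  let ?J = "Sp p f"
  have fin: "finite ?J" by (rule E0_finite[OF p0 assms])
  have "comp S (alphaT p (E0kappa p f)) = (\<Sum>j\<in>?J. comp S (alphaT p (kappa (GG p f j))))"
    by (simp add: E0kappa_eq[OF p0 assms fin] kappa_sum alphaT_sum comp_sum)
  also have "\<dots> = (\<Sum>j\<in>?J. kappa (GG p (E0coact p f S) j))"
  proof (rule sum.cong[OF refl])
    fix j
    have "kappa (H p j (comp S (alpha p (GG p f j)))) = comp S (alphaT p (kappa (GG p f j)))"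
      by (rule coact_core[OF p0]) (rule GG_keys[OF p0 assms])
    then show "comp S (alphaT p (kappa (GG p f j))) = kappa (GG p (E0coact p f S) j)"
      by (simp add: coact_E0(2)[OF p0 assms])
  qed
  also have "\<dots> = E0kappa p (E0coact p f S)"
  proof -
    have "Sp p (E0coact p f S) \<subseteq> ?J" by (auto simp: coact_E0(2)[OF p0 assms])
    then show ?thesis by (simp add: E0kappa_eq[OF p0 coact_E0(1)[OF p0 assms] fin] kappa_sum)
  qed
  finally show ?thesis .
qed

lemma GG_recover:
  assumes "f \<in> E0 p" "finite J" "Sp p f \<subseteq> J"
  shows "H p i (\<Sum>j\<in>J. GG p f j) = (GG p f i :: _ \<Rightarrow>\<^sub>0 'k::field)"
proof -
  have h: "H p i (GG p f j) = (if i = j then GG p f j else 0)" for j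
    by (simp add: GG_def H_H[OF p0])
  have "H p i (\<Sum>j\<in>J. GG p f j) = (\<Sum>j\<in>J. if i = j then GG p f j else 0)"
    by (simp add: H_sum h)
  also have "\<dots> = GG p f i" using assms by (auto simp: sum.delta)
  finally show ?thesis .
qed

lemma E0kappa_inj: "inj_on (E0kappa p) (E0 p :: (nat \<Rightarrow> (mono \<Rightarrow>\<^sub>0 'k::field) set) set)"
proof (rule inj_onI)
  fix f g :: "nat \<Rightarrow> (mono \<Rightarrow>\<^sub>0 'k) set"
  assume f: "f \<in> E0 p" and g: "g \<in> E0 p" and e: "E0kappa p f = E0kappa p g"
  let ?J = "Sp p f \<union> Sp p g"
  have fin: "finite ?J" using E0_finite[OF p0 f] E0_finite[OF p0 g] by simp
  have "kappa (\<Sum>j\<in>?J. GG p f j) = kappa (\<Sum>j\<in>?J. GG p g j)"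
    using e E0kappa_eq[OF p0 f fin] E0kappa_eq[OF p0 g fin] by simp
  then have s: "(\<Sum>j\<in>?J. GG p f j) = (\<Sum>j\<in>?J. GG p g j)" by (rule kappa_inj)
  have "GG p f i = GG p g i" for i
    using GG_recover[OF f fin, of i] GG_recover[OF g fin, of i] s by simp
  then show "f = g"
  proof -
    assume G: "\<And>i. GG p f i = GG p g i"
    show "f = g"
    proof
      fix i
      have "cls p i (rep (f i)) = cls p i (rep (g i))"
        using cls_same[OF p0 E0_rep(1)[OF p0 f] E0_rep(1)[OF p0 g]] G[of i] by (simp add: GG_def)
      then show "f i = g i" using E0_rep(2)[OF p0 f] E0_rep(2)[OF p0 g] by metis
    qed
  qed
qed

lemma E0kappa_TT: "f \<in> E0 p \<Longrightarrow> E0kappa p (f :: nat \<Rightarrow> (mono \<Rightarrow>\<^sub>0 'k::field) set) \<in> TT"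
  by (simp add: E0kappa_eq[OF p0 _ E0_finite[OF p0]] kappa_TT AE1_sumGG[OF p0])

lemma E0kappa_surj:
  assumes "y \<in> TT"
  shows "(y :: _ \<Rightarrow>\<^sub>0 'k::field) \<in> E0kappa p ` E0 p"
proof -
  let ?x = "lin kinv_b y :: _ \<Rightarrow>\<^sub>0 'k"
  have kx: "kappa ?x = y" and ax: "?x \<in> AE1" using kinv_props[OF assms] by auto
  let ?F = "\<lambda>j. H p j ?x"
  have F: "FilC p j (?F j)" for j using ax by (auto simp: FilC_def keys_H AE1_def)
  let ?J = "(\<lambda>m. wt2 p m div p) ` KS ?x"
  have finJ: "finite ?J" by simp
  have HH: "H p j (?F j) = ?F j" for j by (simp add: H_H[OF p0])
  have sub: "{j. H p j (?F j) \<noteq> 0} \<subseteq> ?J"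
  proof
    fix j assume "j \<in> {j. H p j (?F j) \<noteq> 0}"
    then have "?F j \<noteq> 0" by (simp add: HH)
    then obtain m where "m \<in> KS (?F j)" by (metis all_not_in_conv keys_eq_empty)
    then have "m \<in> KS ?x" "wt2 p m = p * j" by (auto simp: keys_H)
    then show "j \<in> ?J" using p0 by (intro image_eqI[of _ _ m]) auto
  qed
  have fin: "finite {j. H p j (?F j) \<noteq> 0}" using sub finJ by (rule finite_subset)
  let ?g = "\<lambda>j. cls p j (?F j)"
  have gE: "?g \<in> E0 p" by (rule mk_E0(1)[OF p0 F fin])
  have Gg: "GG p ?g j = ?F j" for j by (simp add: mk_E0(2)[OF p0 F fin] HH)
  have "E0kappa p ?g = kappa (\<Sum>j\<in>?J. ?F j)"
    using E0kappa_eq[OF p0 gE finJ] sub by (simp add: Gg HH)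
  also have "(\<Sum>j\<in>?J. ?F j) = ?x"
  proof (rule sum_H[OF p0 finJ])
    fix m assume m: "m \<in> KS ?x"
    then have "mAE1 m" using ax by (auto simp: AE1_def)
    then have "p dvd wt2 p m" by (rule mAE1_dvd)
    then have w: "wt2 p m = p * (wt2 p m div p)" by simp
    show "\<exists>j\<in>?J. wt2 p m = p * j"
    proof (rule bexI)
      show "wt2 p m = p * (wt2 p m div p)" by (rule w)
      show "wt2 p m div p \<in> ?J" using m by (rule imageI)
    qed
  qed
  finally have "E0kappa p ?g = y" using kx by simp
  then show ?thesis by (rule image_eqI[OF sym gE])
qed

end

theorem mainTheorem16:
  fixes p :: nat
  assumes "prime p" and "odd p" and "card (UNIV :: 'k::{field,finite} set) = p"
  shows "bij_betw (E0kappa p) (E0 p :: (nat \<Rightarrow> (mono \<Rightarrow>\<^sub>0 'k) set) set) TT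
    \<and> E0one p \<in> (E0 p :: (nat \<Rightarrow> (mono \<Rightarrow>\<^sub>0 'k) set) set)
    \<and> (\<forall>f\<in>(E0 p :: (nat \<Rightarrow> (mono \<Rightarrow>\<^sub>0 'k) set) set). \<forall>g\<in>E0 p.
         E0add p f g \<in> E0 p \<and> E0mul p f g \<in> E0 p)
    \<and> (\<forall>c::'k. \<forall>f\<in>E0 p. E0smul p c f \<in> E0 p)
    \<and> (\<forall>f\<in>(E0 p :: (nat \<Rightarrow> (mono \<Rightarrow>\<^sub>0 'k) set) set). \<forall>S\<subseteq>{0,1,2}. E0coact p f S \<in> E0 p)
    \<and> (\<forall>f\<in>(E0 p :: (nat \<Rightarrow> (mono \<Rightarrow>\<^sub>0 'k) set) set). \<forall>g\<in>E0 p.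
         E0kappa p (E0add p f g) = E0kappa p f + E0kappa p g)
    \<and> (\<forall>c::'k. \<forall>f\<in>E0 p. E0kappa p (E0smul p c f) = sc c (E0kappa p f))
    \<and> (\<forall>f\<in>(E0 p :: (nat \<Rightarrow> (mono \<Rightarrow>\<^sub>0 'k) set) set). \<forall>g\<in>E0 p.
         E0kappa p (E0mul p f g) = tmul (E0kappa p f) (E0kappa p g))
    \<and> E0kappa p (E0one p :: nat \<Rightarrow> (mono \<Rightarrow>\<^sub>0 'k) set) = TTone
    \<and> (\<forall>f\<in>(E0 p :: (nat \<Rightarrow> (mono \<Rightarrow>\<^sub>0 'k) set) set). \<forall>S\<subseteq>{0,1,2}.
         comp S (alphaT p (E0kappa p f)) = E0kappa p (E0coact p f S))"
proof -
  have p0: "p > 0" using assms(1) by (simp add: prime_gt_0_nat)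
  have bij: "bij_betw (E0kappa p) (E0 p :: (nat \<Rightarrow> (mono \<Rightarrow>\<^sub>0 'k) set) set) TT"
    unfolding bij_betw_def
  proof
    show "inj_on (E0kappa p) (E0 p :: (nat \<Rightarrow> (mono \<Rightarrow>\<^sub>0 'k) set) set)" by (rule E0kappa_inj[OF p0])
    show "E0kappa p ` (E0 p :: (nat \<Rightarrow> (mono \<Rightarrow>\<^sub>0 'k) set) set) = TT"
      using E0kappa_TT[OF p0] E0kappa_surj[OF p0] by blast
  qed
  show ?thesis
  proof (intro conjI ballI allI impI)
    show "bij_betw (E0kappa p) (E0 p :: (nat \<Rightarrow> (mono \<Rightarrow>\<^sub>0 'k) set) set) TT" by (rule bij)
    show "E0one p \<in> (E0 p :: (nat \<Rightarrow> (mono \<Rightarrow>\<^sub>0 'k) set) set)" by (rule one_E0(1)[OF p0])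
    show "E0kappa p (E0one p :: nat \<Rightarrow> (mono \<Rightarrow>\<^sub>0 'k) set) = TTone" by (rule one_E0(2)[OF p0])
  next
    fix f g :: "nat \<Rightarrow> (mono \<Rightarrow>\<^sub>0 'k) set" assume f: "f \<in> E0 p" and g: "g \<in> E0 p"
    show "E0add p f g \<in> E0 p" by (rule add_E0(1)[OF p0 f g])
    show "E0mul p f g \<in> E0 p" by (rule mul_E0(1)[OF p0 f g])
    show "E0kappa p (E0add p f g) = E0kappa p f + E0kappa p g" by (rule kappa_add_E0[OF p0 f g])
    show "E0kappa p (E0mul p f g) = tmul (E0kappa p f) (E0kappa p g)" by (rule kappa_mul_E0[OF p0 f g])
  next
    fix c :: 'k and f :: "nat \<Rightarrow> (mono \<Rightarrow>\<^sub>0 'k) set" assume f: "f \<in> E0 p"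
    show "E0smul p c f \<in> E0 p" by (rule smul_E0(1)[OF p0 f])
    show "E0kappa p (E0smul p c f) = sc c (E0kappa p f)" by (rule kappa_smul_E0[OF p0 f])
  next
    fix f :: "nat \<Rightarrow> (mono \<Rightarrow>\<^sub>0 'k) set" and S :: "nat set" assume f: "f \<in> E0 p" and "S \<subseteq> {0, 1, 2}"
    show "E0coact p f S \<in> E0 p" by (rule coact_E0(1)[OF p0 f])
    show "comp S (alphaT p (E0kappa p f)) = E0kappa p (E0coact p f S)" by (rule kappa_coact_E0[OF p0 f])
  qed
qed


end
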